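(* The polynomial algebra $P_n=K[x_1,\dots,x_n]$, with its natural $\mathbb{S}_n$-module structure, is up to isomorphism the only faithful simple $\mathbb{S}_n$-module. Consequently, the Jacobson radical of $\mathbb{S}_n$ is zero and $\mathbb{S}_n$ is a primitive algebra.
   Context: $K$ is a field. $\mathbb{S}_n$ is the $K$-algebra generated by $x_1,\dots,x_n,y_1,\dots,y_n$ subject to the defining relations $y_ix_i=1$ for all $i$, and $[x_i,y_j]=[x_i,x_j]=[y_i,y_j]=0$ for all $i\ne j$. The natural $\mathbb{S}_n$-module structure on $P_n$ is as follows: $x_i$ acts by multiplication; for a monomial $x^\alpha=x_1^{\alpha_1}\cdots x_n^{\alpha_n}$, $y_i$ sends $x^\alpha$ to $x^{\alpha}/x_i$ if $\alpha_i\ge1$ and to $0$ if $\alpha_i=0$. *)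

theory Defs
  imports Complex_Main "HOL-Library.Function_Algebras"
begin

datatype gen = Xg nat | Yg nat

fun gen_idx :: "gen \<Rightarrow> nat" where
  "gen_idx (Xg i) = i"
| "gen_idx (Yg i) = i"

text \<open>Words in the generators x_1..x_n, y_1..y_n (indices 0..n-1).\<close>
definition words :: "nat \<Rightarrow> gen list set" where
  "words n = {w. \<forall>a\<in>set w. gen_idx a < n}"

text \<open>The free associative K-algebra on the 2n generators: finitely supported
  K-valued functions on words.\<close>
definition Fn :: "nat \<Rightarrow> (gen list \<Rightarrow> 'k::field) set" where
  "Fn n = {f. finite {w. f w \<noteq> 0} \<and> (\<forall>w. f w \<noteq> 0 \<longrightarrow> w \<in> words n)}"

definition delta :: "gen list \<Rightarrow> gen list \<Rightarrow> 'k::field" where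
  "delta u = (\<lambda>w. if w = u then 1 else 0)"

definition fmul :: "(gen list \<Rightarrow> 'k::field) \<Rightarrow> (gen list \<Rightarrow> 'k) \<Rightarrow> gen list \<Rightarrow> 'k" where
  "fmul f g = (\<lambda>w. \<Sum>i\<le>length w. f (take i w) * g (drop i w))"

definition Sn_rels :: "nat \<Rightarrow> (gen list \<Rightarrow> 'k::field) set" where
  "Sn_rels n =
     {(\<lambda>w. delta [Yg i, Xg i] w - delta [] w) | i. i < n}
   \<union> {(\<lambda>w. delta [Xg i, Yg j] w - delta [Yg j, Xg i] w) | i j. i < n \<and> j < n \<and> i \<noteq> j}
   \<union> {(\<lambda>w. delta [Xg i, Xg j] w - delta [Xg j, Xg i] w) | i j. i < n \<and> j < n \<and> i \<noteq> j}
   \<union> {(\<lambda>w. delta [Yg i, Yg j] w - delta [Yg j, Yg i] w) | i j. i < n \<and> j < n \<and> i \<noteq> j}"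

text \<open>The two-sided ideal of the free algebra generated by the relations;
  S_n is the quotient Fn n / Sn_ideal n.\<close>
inductive_set Sn_ideal :: "nat \<Rightarrow> (gen list \<Rightarrow> 'k::field) set" for n where
  rel: "r \<in> Sn_rels n \<Longrightarrow> r \<in> Sn_ideal n"
| zero: "(\<lambda>w. 0) \<in> Sn_ideal n"
| add: "f \<in> Sn_ideal n \<Longrightarrow> g \<in> Sn_ideal n \<Longrightarrow> (\<lambda>w. f w + g w) \<in> Sn_ideal n"
| smul: "f \<in> Sn_ideal n \<Longrightarrow> (\<lambda>w. c * f w) \<in> Sn_ideal n"
| lmul: "f \<in> Sn_ideal n \<Longrightarrow> u \<in> words n \<Longrightarrow> fmul (delta u) f \<in> Sn_ideal n"
| rmul: "f \<in> Sn_ideal n \<Longrightarrow> u \<in> words n \<Longrightarrow> fmul f (delta u) \<in> Sn_ideal n"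

definition Sn_module ::
  "nat \<Rightarrow> ('k::field \<Rightarrow> 'm::ab_group_add \<Rightarrow> 'm) \<Rightarrow> 'm set
     \<Rightarrow> (nat \<Rightarrow> 'm \<Rightarrow> 'm) \<Rightarrow> (nat \<Rightarrow> 'm \<Rightarrow> 'm) \<Rightarrow> bool" where
  "Sn_module n sc M X Y \<longleftrightarrow>
     vector_space sc \<and> module.subspace sc M \<and>
     (\<forall>i<n. \<forall>m\<in>M. X i m \<in> M \<and> Y i m \<in> M) \<and>
     (\<forall>i<n. \<forall>m\<in>M. \<forall>m'\<in>M. X i (m + m') = X i m + X i m' \<and> Y i (m + m') = Y i m + Y i m') \<and>
     (\<forall>i<n. \<forall>c. \<forall>m\<in>M. X i (sc c m) = sc c (X i m) \<and> Y i (sc c m) = sc c (Y i m)) \<and>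
     (\<forall>i<n. \<forall>m\<in>M. Y i (X i m) = m) \<and>
     (\<forall>i<n. \<forall>j<n. i \<noteq> j \<longrightarrow> (\<forall>m\<in>M.
         X i (Y j m) = Y j (X i m) \<and> X i (X j m) = X j (X i m) \<and> Y i (Y j m) = Y j (Y i m)))"

fun letter_act :: "(nat \<Rightarrow> 'm \<Rightarrow> 'm) \<Rightarrow> (nat \<Rightarrow> 'm \<Rightarrow> 'm) \<Rightarrow> gen \<Rightarrow> 'm \<Rightarrow> 'm" where
  "letter_act X Y (Xg i) = X i"
| "letter_act X Y (Yg i) = Y i"

text \<open>Action of a word a_1 a_2 ... a_k (the product a_1 * ... * a_k).\<close>
fun wact :: "(nat \<Rightarrow> 'm \<Rightarrow> 'm) \<Rightarrow> (nat \<Rightarrow> 'm \<Rightarrow> 'm) \<Rightarrow> gen list \<Rightarrow> 'm \<Rightarrow> 'm" where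
  "wact X Y [] m = m"
| "wact X Y (a # w) m = letter_act X Y a (wact X Y w m)"

definition actF :: "('k::field \<Rightarrow> 'm::ab_group_add \<Rightarrow> 'm) \<Rightarrow> (nat \<Rightarrow> 'm \<Rightarrow> 'm) \<Rightarrow> (nat \<Rightarrow> 'm \<Rightarrow> 'm)
     \<Rightarrow> (gen list \<Rightarrow> 'k) \<Rightarrow> 'm \<Rightarrow> 'm" where
  "actF sc X Y f m = (\<Sum>w\<in>{w. f w \<noteq> 0}. sc (f w) (wact X Y w m))"

text \<open>Faithful: the annihilator in S_n is zero, i.e. every element of the free
  algebra acting as zero on M lies in the defining ideal.\<close>
definition Sn_faithful ::
  "nat \<Rightarrow> ('k::field \<Rightarrow> 'm::ab_group_add \<Rightarrow> 'm) \<Rightarrow> 'm set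
     \<Rightarrow> (nat \<Rightarrow> 'm \<Rightarrow> 'm) \<Rightarrow> (nat \<Rightarrow> 'm \<Rightarrow> 'm) \<Rightarrow> bool" where
  "Sn_faithful n sc M X Y \<longleftrightarrow>
     (\<forall>f\<in>Fn n. (\<forall>m\<in>M. actF sc X Y f m = 0) \<longrightarrow> f \<in> Sn_ideal n)"

definition Sn_simple ::
  "nat \<Rightarrow> ('k::field \<Rightarrow> 'm::ab_group_add \<Rightarrow> 'm) \<Rightarrow> 'm set
     \<Rightarrow> (nat \<Rightarrow> 'm \<Rightarrow> 'm) \<Rightarrow> (nat \<Rightarrow> 'm \<Rightarrow> 'm) \<Rightarrow> bool" where
  "Sn_simple n sc M X Y \<longleftrightarrow>
     M \<noteq> {0} \<and>
     (\<forall>U. module.subspace sc U \<and> U \<subseteq> M \<and> (\<forall>i<n. \<forall>u\<in>U. X i u \<in> U \<and> Y i u \<in> U)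
          \<longrightarrow> U = {0} \<or> U = M)"

text \<open>P_n = K[x_1..x_n]: a polynomial is its coefficient function on exponent
  vectors alpha (alpha i = exponent of x_{i+1}), finitely supported, involving only
  the first n variables.\<close>
definition Pn :: "nat \<Rightarrow> ((nat \<Rightarrow> nat) \<Rightarrow> 'k::field) set" where
  "Pn n = {p. finite {\<alpha>. p \<alpha> \<noteq> 0} \<and> (\<forall>\<alpha>. p \<alpha> \<noteq> 0 \<longrightarrow> (\<forall>i\<ge>n. \<alpha> i = 0))}"

definition Pscale :: "'k::field \<Rightarrow> ((nat \<Rightarrow> nat) \<Rightarrow> 'k) \<Rightarrow> (nat \<Rightarrow> nat) \<Rightarrow> 'k" where
  "Pscale c p = (\<lambda>\<alpha>. c * p \<alpha>)"

text \<open>x_i acts by multiplication by x_i.\<close>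
definition xop :: "nat \<Rightarrow> ((nat \<Rightarrow> nat) \<Rightarrow> 'k::field) \<Rightarrow> (nat \<Rightarrow> nat) \<Rightarrow> 'k" where
  "xop i p = (\<lambda>\<alpha>. if 1 \<le> \<alpha> i then p (\<alpha>(i := \<alpha> i - 1)) else 0)"

text \<open>y_i sends x^alpha to x^alpha / x_i if alpha_i \<ge> 1, and to 0 otherwise.\<close>
definition yop :: "nat \<Rightarrow> ((nat \<Rightarrow> nat) \<Rightarrow> 'k::field) \<Rightarrow> (nat \<Rightarrow> nat) \<Rightarrow> 'k" where
  "yop i p = (\<lambda>\<alpha>. p (\<alpha>(i := \<alpha> i + 1)))"

definition Sn_iso_Pn ::
  "nat \<Rightarrow> ('k::field \<Rightarrow> 'm::ab_group_add \<Rightarrow> 'm) \<Rightarrow> 'm set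
     \<Rightarrow> (nat \<Rightarrow> 'm \<Rightarrow> 'm) \<Rightarrow> (nat \<Rightarrow> 'm \<Rightarrow> 'm) \<Rightarrow> bool" where
  "Sn_iso_Pn n sc M X Y \<longleftrightarrow>
     (\<exists>\<phi> :: 'm \<Rightarrow> ((nat \<Rightarrow> nat) \<Rightarrow> 'k).
        bij_betw \<phi> M (Pn n) \<and>
        (\<forall>m\<in>M. \<forall>m'\<in>M. \<phi> (m + m') = (\<lambda>\<alpha>. \<phi> m \<alpha> + \<phi> m' \<alpha>)) \<and>
        (\<forall>c. \<forall>m\<in>M. \<phi> (sc c m) = Pscale c (\<phi> m)) \<and>
        (\<forall>i<n. \<forall>m\<in>M. \<phi> (X i m) = xop i (\<phi> m) \<and> \<phi> (Y i m) = yop i (\<phi> m)))"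

text \<open>Left ideals of S_n, as left ideals of the free algebra containing the
  defining ideal.\<close>
definition Sn_left_ideal :: "nat \<Rightarrow> (gen list \<Rightarrow> 'k::field) set \<Rightarrow> bool" where
  "Sn_left_ideal n L \<longleftrightarrow>
     Sn_ideal n \<subseteq> L \<and> L \<subseteq> Fn n \<and>
     (\<forall>f\<in>L. \<forall>g\<in>L. (\<lambda>w. f w + g w) \<in> L) \<and>
     (\<forall>r\<in>Fn n. \<forall>f\<in>L. fmul r f \<in> L)"

definition Sn_max_left_ideal :: "nat \<Rightarrow> (gen list \<Rightarrow> 'k::field) set \<Rightarrow> bool" where
  "Sn_max_left_ideal n L \<longleftrightarrow>
     Sn_left_ideal n L \<and> L \<noteq> Fn n \<and>
     (\<forall>L'. Sn_left_ideal n L' \<and> L \<subseteq> L' \<and> L' \<noteq> Fn n \<longrightarrow> L' = L)"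

text \<open>Jacobson radical of S_n: intersection of all maximal left ideals
  (preimage in the free algebra).\<close>
definition Sn_jacobson :: "nat \<Rightarrow> (gen list \<Rightarrow> 'k::field) set" where
  "Sn_jacobson n = {a \<in> Fn n. \<forall>L. Sn_max_left_ideal n L \<longrightarrow> a \<in> L}"

text \<open>S_n is (left) primitive: it has a faithful simple left module. Every simple
  module is S_n/L for a maximal left ideal L, whose annihilator is
  {a. a S_n \<subseteq> L}; so primitivity means this annihilator is zero for some L.\<close>
definition Sn_primitive :: "nat \<Rightarrow> 'k::field itself \<Rightarrow> bool" where
  "Sn_primitive n _ \<longleftrightarrow>
     (\<exists>L :: (gen list \<Rightarrow> 'k) set. Sn_max_left_ideal n L \<and>
        {a \<in> Fn n. \<forall>r\<in>Fn n. fmul a r \<in> L} = Sn_ideal n)"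

end

theory Submission
  imports Defs
begin

definition supp :: "(gen list \<Rightarrow> 'k::field) \<Rightarrow> gen list set" where
  "supp f = {w. f w \<noteq> 0}"

lemma words_Cons[simp]: "(a # w \<in> words n) = (gen_idx a < n \<and> w \<in> words n)"
  by (auto simp: words_def)
lemma words_Nil[simp]: "[] \<in> words n"
  by (auto simp: words_def)
lemma words_append[simp]: "(u @ v \<in> words n) = (u \<in> words n \<and> v \<in> words n)"
  by (auto simp: words_def)

lemma fmul_delta_left:
  "fmul (delta u) f w = (if length u \<le> length w \<and> take (length u) w = u then f (drop (length u) w) else 0)"
proof -
  have "fmul (delta u) f w = (\<Sum>i\<le>length w. if i = length u then (if take (length u) w = u then f (drop (length u) w) else 0) else 0)"
    unfolding fmul_def
  proof (rule sum.cong[OF refl])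
    fix i assume "i \<in> {..length w}"
    then have "length (take i w) = i" by simp
    then show "delta u (take i w) * f (drop i w) = (if i = length u then (if take (length u) w = u then f (drop (length u) w) else 0) else 0)"
      by (auto simp: delta_def)
  qed
  also have "\<dots> = (if length u \<le> length w \<and> take (length u) w = u then f (drop (length u) w) else 0)"
    by (subst sum.delta) auto
  finally show ?thesis .
qed

lemma fmul_delta_right:
  "fmul f (delta u) w = (if length u \<le> length w \<and> drop (length w - length u) w = u then f (take (length w - length u) w) else 0)"
proof -
  have "fmul f (delta u) w = (\<Sum>i\<le>length w. if i = length w - length u then (if length u \<le> length w \<and> drop (length w - length u) w = u then f (take (length w - length u) w) else 0) else 0)"
    unfolding fmul_def delta_def
    by (rule sum.cong) auto
  also have "\<dots> = (if length u \<le> length w \<and> drop (length w - length u) w = u then f (take (length w - length u) w) else 0)"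
    by (subst sum.delta) auto
  finally show ?thesis .
qed

lemma fmul_delta_left_app: "fmul (delta u) f (u @ v) = f v"
  by (simp add: fmul_delta_left)

lemma fmul_delta_right_app: "fmul f (delta u) (v @ u) = f v"
  by (simp add: fmul_delta_right)

lemma supp_fmul_delta_left: "supp (fmul (delta u) f) = (\<lambda>v. u @ v) ` supp f"
proof (rule set_eqI)
  fix w
  show "w \<in> supp (fmul (delta u) f) \<longleftrightarrow> w \<in> (\<lambda>v. u @ v) ` supp f"
  proof
    assume "w \<in> supp (fmul (delta u) f)"
    then have h: "length u \<le> length w \<and> take (length u) w = u" "f (drop (length u) w) \<noteq> 0"
      by (auto simp: supp_def fmul_delta_left split: if_splits)
    then have "w = u @ drop (length u) w" by (metis append_take_drop_id)
    then show "w \<in> (\<lambda>v. u @ v) ` supp f" using h by (auto simp: supp_def)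
  next
    assume "w \<in> (\<lambda>v. u @ v) ` supp f"
    then show "w \<in> supp (fmul (delta u) f)" by (auto simp: supp_def fmul_delta_left)
  qed
qed

lemma supp_fmul_delta_right: "supp (fmul f (delta u)) = (\<lambda>v. v @ u) ` supp f"
proof (rule set_eqI)
  fix w
  show "w \<in> supp (fmul f (delta u)) \<longleftrightarrow> w \<in> (\<lambda>v. v @ u) ` supp f"
  proof
    assume "w \<in> supp (fmul f (delta u))"
    then have h: "length u \<le> length w \<and> drop (length w - length u) w = u" "f (take (length w - length u) w) \<noteq> 0"
      by (auto simp: supp_def fmul_delta_right split: if_splits)
    then have "w = take (length w - length u) w @ u" by (metis append_take_drop_id)
    then show "w \<in> (\<lambda>v. v @ u) ` supp f" using h by (auto simp: supp_def)
  next
    assume "w \<in> (\<lambda>v. v @ u) ` supp f"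
    then show "w \<in> supp (fmul f (delta u))" by (auto simp: supp_def fmul_delta_right)
  qed
qed

lemma Fn_iff: "f \<in> Fn n \<longleftrightarrow> finite (supp f) \<and> supp f \<subseteq> words n"
  by (auto simp: Fn_def supp_def)

lemma Fn_zero[simp]: "(\<lambda>w. 0) \<in> Fn n"
  by (auto simp: Fn_iff supp_def)

lemma Fn_add: "f \<in> Fn n \<Longrightarrow> g \<in> Fn n \<Longrightarrow> (\<lambda>w. f w + g w) \<in> Fn n"
proof -
  assume a: "f \<in> Fn n" "g \<in> Fn n"
  have "supp (\<lambda>w. f w + g w) \<subseteq> supp f \<union> supp g" by (auto simp: supp_def)
  with a show ?thesis unfolding Fn_iff by (meson finite_UnI finite_subset le_sup_iff order_trans)
qed

lemma Fn_smul: "f \<in> Fn n \<Longrightarrow> (\<lambda>w. c * f w) \<in> Fn n"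
proof -
  assume a: "f \<in> Fn n"
  have "supp (\<lambda>w. c * f w) \<subseteq> supp f" by (auto simp: supp_def)
  with a show ?thesis unfolding Fn_iff by (meson finite_subset order_trans)
qed

lemma Fn_diff: "f \<in> Fn n \<Longrightarrow> g \<in> Fn n \<Longrightarrow> (\<lambda>w. f w - g w) \<in> Fn n"
proof -
  assume a: "f \<in> Fn n" "g \<in> Fn n"
  have "supp (\<lambda>w. f w - g w) \<subseteq> supp f \<union> supp g" by (auto simp: supp_def)
  with a show ?thesis unfolding Fn_iff by (meson finite_UnI finite_subset le_sup_iff order_trans)
qed

lemma supp_delta: "supp (delta u :: gen list \<Rightarrow> 'k::field) = {u}"
  by (auto simp: supp_def delta_def)

lemma Fn_delta: "u \<in> words n \<Longrightarrow> (delta u :: gen list \<Rightarrow> 'k::field) \<in> Fn n"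
  by (simp add: Fn_iff supp_delta)

lemma Fn_fmul_delta_left: "f \<in> Fn n \<Longrightarrow> u \<in> words n \<Longrightarrow> fmul (delta u) f \<in> Fn n"
  by (auto simp: Fn_iff supp_fmul_delta_left)

lemma Fn_fmul_delta_right: "f \<in> Fn n \<Longrightarrow> u \<in> words n \<Longrightarrow> fmul f (delta u) \<in> Fn n"
  by (auto simp: Fn_iff supp_fmul_delta_right)

lemma fmul_expand:
  fixes a r :: "gen list \<Rightarrow> 'k::field"
  assumes "finite S" "supp a \<subseteq> S"
  shows "fmul a r = (\<lambda>w. \<Sum>u\<in>S. a u * fmul (delta u) r w)"
proof
  fix w
  have "(\<Sum>u\<in>S. a u * fmul (delta u) r w) = (\<Sum>u\<in>S. \<Sum>i\<le>length w. a u * (delta u (take i w) * r (drop i w)))"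
    unfolding fmul_def by (simp add: sum_distrib_left)
  also have "\<dots> = (\<Sum>i\<le>length w. \<Sum>u\<in>S. a u * (delta u (take i w) * r (drop i w)))"
    by (rule sum.swap)
  also have "\<dots> = (\<Sum>i\<le>length w. a (take i w) * r (drop i w))"
  proof (rule sum.cong[OF refl])
    fix i
    have "(\<Sum>u\<in>S. a u * (delta u (take i w) * r (drop i w))) = (\<Sum>u\<in>S. if take i w = u then a (take i w) * r (drop i w) else 0)"
      by (rule sum.cong) (auto simp: delta_def)
    also have "\<dots> = (if take i w \<in> S then a (take i w) * r (drop i w) else 0)"
      using assms(1) by (simp add: sum.delta')
    also have "\<dots> = a (take i w) * r (drop i w)"
      using assms(2) by (auto simp: supp_def)
    finally show "(\<Sum>u\<in>S. a u * (delta u (take i w) * r (drop i w))) = a (take i w) * r (drop i w)" .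
  qed
  finally show "fmul a r w = (\<Sum>u\<in>S. a u * fmul (delta u) r w)"
    unfolding fmul_def by simp
qed

lemma Fn_fmul: "a \<in> Fn n \<Longrightarrow> r \<in> Fn n \<Longrightarrow> fmul a r \<in> Fn n"
proof -
  assume a: "a \<in> Fn n" and r: "r \<in> Fn n"
  have sub: "supp (fmul a r) \<subseteq> (\<Union>u\<in>supp a. supp (fmul (delta u) r))"
  proof
    fix w assume "w \<in> supp (fmul a r)"
    then have "(\<Sum>u\<in>supp a. a u * fmul (delta u) r w) \<noteq> 0"
      using fmul_expand[of "supp a" a r] a by (auto simp: supp_def Fn_iff)
    then obtain u where "u \<in> supp a" "fmul (delta u) r w \<noteq> 0"
      by (metis (no_types, lifting) mult_zero_right sum.neutral)
    then show "w \<in> (\<Union>u\<in>supp a. supp (fmul (delta u) r))" by (auto simp: supp_def)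
  qed
  have fin: "finite (\<Union>u\<in>supp a. supp (fmul (delta u) r))"
    using a r by (auto simp: Fn_iff supp_fmul_delta_left)
  have w: "(\<Union>u\<in>supp a. supp (fmul (delta u) r)) \<subseteq> words n"
    using a r by (auto simp: Fn_iff supp_fmul_delta_left)
  show ?thesis unfolding Fn_iff using sub fin w by (meson finite_subset order_trans)
qed

lemma Sn_rels_Fn: "r \<in> Sn_rels n \<Longrightarrow> r \<in> Fn n"
  unfolding Sn_rels_def
  by (auto intro!: Fn_diff Fn_delta)

lemma Sn_ideal_Fn: "f \<in> Sn_ideal n \<Longrightarrow> f \<in> Fn n"
  by (induction rule: Sn_ideal.induct)
     (auto intro: Sn_rels_Fn Fn_add Fn_smul Fn_fmul_delta_left Fn_fmul_delta_right)

lemma Sn_ideal_sum: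
  assumes "finite S" "\<And>u. u \<in> S \<Longrightarrow> g u \<in> Sn_ideal n"
  shows "(\<lambda>w. \<Sum>u\<in>S. c u * g u w) \<in> Sn_ideal n"
  using assms
proof (induction S rule: finite_induct)
  case empty then show ?case by (simp add: Sn_ideal.zero)
next
  case (insert x F)
  have "(\<lambda>w. \<Sum>u\<in>insert x F. c u * g u w) = (\<lambda>w. (\<lambda>w. c x * g x w) w + (\<lambda>w. \<Sum>u\<in>F. c u * g u w) w)"
    using insert by simp
  also have "\<dots> \<in> Sn_ideal n"
    using insert by (intro Sn_ideal.add Sn_ideal.smul) auto
  finally show ?case .
qed


lemma wact_append: "wact X Y (u @ v) m = wact X Y u (wact X Y v m)"
  by (induction u) auto

locale smod =
  fixes n :: nat and sc :: "'k::field \<Rightarrow> 'm::ab_group_add \<Rightarrow> 'm"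
    and M :: "'m set" and X Y :: "nat \<Rightarrow> 'm \<Rightarrow> 'm"
  assumes smod: "Sn_module n sc M X Y"
begin

sublocale vs: vector_space sc
  using smod unfolding Sn_module_def by auto

lemma subM: "vs.subspace M" using smod unfolding Sn_module_def by auto
lemma M0: "0 \<in> M" using subM unfolding vs.subspace_def by auto
lemma Madd: "a \<in> M \<Longrightarrow> b \<in> M \<Longrightarrow> a + b \<in> M" using subM unfolding vs.subspace_def by auto
lemma Msc: "a \<in> M \<Longrightarrow> sc c a \<in> M" using subM unfolding vs.subspace_def by auto
lemma Mdiff: "a \<in> M \<Longrightarrow> b \<in> M \<Longrightarrow> a - b \<in> M"
  using Madd[of a "sc (-1) b"] Msc[of b "-1"] by simp
lemma Msum: "finite S \<Longrightarrow> (\<And>x. x \<in> S \<Longrightarrow> g x \<in> M) \<Longrightarrow> sum g S \<in> M"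
  by (induction S rule: finite_induct) (auto intro: M0 Madd)

lemma Xc: "i < n \<Longrightarrow> m \<in> M \<Longrightarrow> X i m \<in> M" using smod unfolding Sn_module_def by auto
lemma Yc: "i < n \<Longrightarrow> m \<in> M \<Longrightarrow> Y i m \<in> M" using smod unfolding Sn_module_def by auto
lemma Xadd: "i < n \<Longrightarrow> m \<in> M \<Longrightarrow> m' \<in> M \<Longrightarrow> X i (m + m') = X i m + X i m'"
  using smod unfolding Sn_module_def by auto
lemma Yadd: "i < n \<Longrightarrow> m \<in> M \<Longrightarrow> m' \<in> M \<Longrightarrow> Y i (m + m') = Y i m + Y i m'"
  using smod unfolding Sn_module_def by auto
lemma Xsc: "i < n \<Longrightarrow> m \<in> M \<Longrightarrow> X i (sc c m) = sc c (X i m)"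
  using smod unfolding Sn_module_def by auto
lemma Ysc: "i < n \<Longrightarrow> m \<in> M \<Longrightarrow> Y i (sc c m) = sc c (Y i m)"
  using smod unfolding Sn_module_def by auto
lemma YX: "i < n \<Longrightarrow> m \<in> M \<Longrightarrow> Y i (X i m) = m"
  using smod unfolding Sn_module_def by auto
lemma comm: "i < n \<Longrightarrow> j < n \<Longrightarrow> i \<noteq> j \<Longrightarrow> m \<in> M \<Longrightarrow>
   X i (Y j m) = Y j (X i m) \<and> X i (X j m) = X j (X i m) \<and> Y i (Y j m) = Y j (Y i m)"
  using smod unfolding Sn_module_def by blast

lemma L_closed: "gen_idx a < n \<Longrightarrow> m \<in> M \<Longrightarrow> letter_act X Y a m \<in> M"
  by (cases a) (auto intro: Xc Yc)
lemma L_add: "gen_idx a < n \<Longrightarrow> m \<in> M \<Longrightarrow> m' \<in> M \<Longrightarrow> letter_act X Y a (m + m') = letter_act X Y a m + letter_act X Y a m'"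
  by (cases a) (auto simp: Xadd Yadd)
lemma L_sc: "gen_idx a < n \<Longrightarrow> m \<in> M \<Longrightarrow> letter_act X Y a (sc c m) = sc c (letter_act X Y a m)"
  by (cases a) (auto simp: Xsc Ysc)

lemma W_closed: "w \<in> words n \<Longrightarrow> m \<in> M \<Longrightarrow> wact X Y w m \<in> M"
  by (induction w) (auto intro: L_closed)
lemma W_add: "w \<in> words n \<Longrightarrow> m \<in> M \<Longrightarrow> m' \<in> M \<Longrightarrow> wact X Y w (m + m') = wact X Y w m + wact X Y w m'"
  by (induction w) (auto simp: L_add W_closed)
lemma W_sc: "w \<in> words n \<Longrightarrow> m \<in> M \<Longrightarrow> wact X Y w (sc c m) = sc c (wact X Y w m)"
  by (induction w) (auto simp: L_sc W_closed)
lemma W_zero: "w \<in> words n \<Longrightarrow> wact X Y w 0 = 0"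
  using W_sc[of w 0 0] M0 by simp
lemma W_sum: assumes w: "w \<in> words n" and fin: "finite S" and g: "\<And>x. x \<in> S \<Longrightarrow> g x \<in> M" shows
   "wact X Y w (sum g S) = (\<Sum>x\<in>S. wact X Y w (g x))"
  using fin g proof (induction S rule: finite_induct)
  case empty then show ?case using w by (simp add: W_zero)
next
  case (insert x F) then show ?case using w by (simp add: W_add Msum)
qed
lemma W_diff: "w \<in> words n \<Longrightarrow> m \<in> M \<Longrightarrow> m' \<in> M \<Longrightarrow> wact X Y w (m - m') = wact X Y w m - wact X Y w m'"
  using W_add[of w m "sc (-1) m'"] W_sc[of w m' "-1"] Msc[of m' "-1"] by simp
lemma X_diff: "i < n \<Longrightarrow> m \<in> M \<Longrightarrow> m' \<in> M \<Longrightarrow> X i (m - m') = X i m - X i m'"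
  using W_diff[of "[Xg i]"] by simp
lemma Y_diff: "i < n \<Longrightarrow> m \<in> M \<Longrightarrow> m' \<in> M \<Longrightarrow> Y i (m - m') = Y i m - Y i m'"
  using W_diff[of "[Yg i]"] by simp
lemma X_zero: "i < n \<Longrightarrow> X i 0 = 0" using W_zero[of "[Xg i]"] by simp
lemma Y_zero: "i < n \<Longrightarrow> Y i 0 = 0" using W_zero[of "[Yg i]"] by simp

lemma actF_superset:
  assumes "finite S" "supp f \<subseteq> S"
  shows "actF sc X Y f m = (\<Sum>w\<in>S. sc (f w) (wact X Y w m))"
  unfolding actF_def
  by (rule sum.mono_neutral_left) (use assms in \<open>auto simp: supp_def\<close>)

lemma actF_in: "f \<in> Fn n \<Longrightarrow> m \<in> M \<Longrightarrow> actF sc X Y f m \<in> M"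
  unfolding actF_def
  by (rule Msum) (auto simp: Fn_iff supp_def intro!: Msc W_closed)

lemma actF_add: "f \<in> Fn n \<Longrightarrow> g \<in> Fn n \<Longrightarrow>
   actF sc X Y (\<lambda>w. f w + g w) m = actF sc X Y f m + actF sc X Y g m"
proof -
  assume f: "f \<in> Fn n" and g: "g \<in> Fn n"
  let ?S = "supp f \<union> supp g"
  have fin: "finite ?S" using f g by (auto simp: Fn_iff)
  have "actF sc X Y (\<lambda>w. f w + g w) m = (\<Sum>w\<in>?S. sc (f w + g w) (wact X Y w m))"
    by (rule actF_superset[OF fin]) (auto simp: supp_def)
  also have "\<dots> = (\<Sum>w\<in>?S. sc (f w) (wact X Y w m)) + (\<Sum>w\<in>?S. sc (g w) (wact X Y w m))"
    by (simp add: vs.scale_left_distrib sum.distrib)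
  also have "\<dots> = actF sc X Y f m + actF sc X Y g m"
    using actF_superset[OF fin, of f m] actF_superset[OF fin, of g m] by auto
  finally show ?thesis .
qed

lemma actF_smul: "f \<in> Fn n \<Longrightarrow> actF sc X Y (\<lambda>w. c * f w) m = sc c (actF sc X Y f m)"
proof -
  assume f: "f \<in> Fn n"
  have fin: "finite (supp f)" using f by (auto simp: Fn_iff)
  have "actF sc X Y (\<lambda>w. c * f w) m = (\<Sum>w\<in>supp f. sc (c * f w) (wact X Y w m))"
    by (rule actF_superset[OF fin]) (auto simp: supp_def)
  also have "\<dots> = sc c (\<Sum>w\<in>supp f. sc (f w) (wact X Y w m))"
    by (simp add: vs.scale_sum_right)
  also have "\<dots> = sc c (actF sc X Y f m)"
    using fin by (simp add: actF_superset)
  finally show ?thesis .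
qed

lemma actF_zero_fun: "actF sc X Y (\<lambda>w. 0) m = 0"
  by (simp add: actF_def)

lemma actF_diff: "f \<in> Fn n \<Longrightarrow> g \<in> Fn n \<Longrightarrow>
   actF sc X Y (\<lambda>w. f w - g w) m = actF sc X Y f m - actF sc X Y g m"
proof -
  assume f: "f \<in> Fn n" and g: "g \<in> Fn n"
  have "(\<lambda>w. f w - g w) = (\<lambda>w. f w + (\<lambda>w. (-1) * g w) w)" by auto
  then have "actF sc X Y (\<lambda>w. f w - g w) m = actF sc X Y f m + actF sc X Y (\<lambda>w. (-1) * g w) m"
    using actF_add[OF f Fn_smul[OF g, of "-1"], of m] by simp
  also have "\<dots> = actF sc X Y f m - actF sc X Y g m"
    using actF_smul[OF g, of "-1" m] by simp
  finally show ?thesis .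
qed

lemma actF_delta: "actF sc X Y (delta u) m = wact X Y u m"
  by (simp add: actF_def delta_def)

lemma actF_lmul:
  assumes f: "f \<in> Fn n" and u: "u \<in> words n" and m: "m \<in> M"
  shows "actF sc X Y (fmul (delta u) f) m = wact X Y u (actF sc X Y f m)"
proof -
  have fin: "finite (supp f)" and sw: "supp f \<subseteq> words n" using f by (auto simp: Fn_iff)
  have "actF sc X Y (fmul (delta u) f) m = (\<Sum>w\<in>(\<lambda>v. u @ v) ` supp f. sc (fmul (delta u) f w) (wact X Y w m))"
    by (rule actF_superset) (use fin in \<open>auto simp: supp_fmul_delta_left\<close>)
  also have "\<dots> = (\<Sum>v\<in>supp f. sc (f v) (wact X Y u (wact X Y v m)))"
    by (subst sum.reindex) (auto simp: inj_on_def fmul_delta_left_app wact_append)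
  also have "\<dots> = (\<Sum>v\<in>supp f. wact X Y u (sc (f v) (wact X Y v m)))"
    using sw m u by (intro sum.cong) (auto simp: W_sc W_closed)
  also have "\<dots> = wact X Y u (\<Sum>v\<in>supp f. sc (f v) (wact X Y v m))"
    using sw m u fin by (subst W_sum) (auto intro!: Msc W_closed)
  also have "\<dots> = wact X Y u (actF sc X Y f m)"
    using fin by (simp add: actF_superset)
  finally show ?thesis .
qed

lemma actF_rmul:
  assumes f: "f \<in> Fn n"
  shows "actF sc X Y (fmul f (delta u)) m = actF sc X Y f (wact X Y u m)"
proof -
  have fin: "finite (supp f)" using f by (auto simp: Fn_iff)
  have "actF sc X Y (fmul f (delta u)) m = (\<Sum>w\<in>(\<lambda>v. v @ u) ` supp f. sc (fmul f (delta u) w) (wact X Y w m))"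
    by (rule actF_superset) (use fin in \<open>auto simp: supp_fmul_delta_right\<close>)
  also have "\<dots> = (\<Sum>v\<in>supp f. sc (f v) (wact X Y v (wact X Y u m)))"
    by (subst sum.reindex) (auto simp: inj_on_def fmul_delta_right_app wact_append)
  also have "\<dots> = actF sc X Y f (wact X Y u m)"
    using fin by (simp add: actF_superset)
  finally show ?thesis .
qed

lemma actF_sum:
  assumes "finite S" "\<And>u. u \<in> S \<Longrightarrow> g u \<in> Fn n"
  shows "actF sc X Y (\<lambda>w. \<Sum>u\<in>S. c u * g u w) m = (\<Sum>u\<in>S. sc (c u) (actF sc X Y (g u) m))"
  using assms
proof (induction S rule: finite_induct)
  case empty then show ?case by (simp add: actF_zero_fun)
next
  case (insert x F)
  have fF: "(\<lambda>w. \<Sum>u\<in>F. c u * g u w) \<in> Fn n"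
    using insert(1,4)
  proof (induction F rule: finite_induct)
    case empty then show ?case by simp
  next
    case (insert y G)
    have "(\<lambda>w. \<Sum>u\<in>insert y G. c u * g u w) = (\<lambda>w. (\<lambda>w. c y * g y w) w + (\<lambda>w. \<Sum>u\<in>G. c u * g u w) w)"
      using insert by simp
    also have "\<dots> \<in> Fn n" using insert by (intro Fn_add Fn_smul) auto
    finally show ?case .
  qed
  have "(\<lambda>w. \<Sum>u\<in>insert x F. c u * g u w) = (\<lambda>w. (\<lambda>w. c x * g x w) w + (\<lambda>w. \<Sum>u\<in>F. c u * g u w) w)"
    using insert by simp
  then show ?case using insert fF by (simp add: actF_add Fn_smul actF_smul)
qed

lemma actF_mult:
  assumes a: "a \<in> Fn n" and r: "r \<in> Fn n" and m: "m \<in> M"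
  shows "actF sc X Y (fmul a r) m = actF sc X Y a (actF sc X Y r m)"
proof -
  have fin: "finite (supp a)" and sw: "supp a \<subseteq> words n" using a by (auto simp: Fn_iff)
  have "actF sc X Y (fmul a r) m = actF sc X Y (\<lambda>w. \<Sum>u\<in>supp a. a u * fmul (delta u) r w) m"
    by (simp add: fmul_expand[OF fin])
  also have "\<dots> = (\<Sum>u\<in>supp a. sc (a u) (actF sc X Y (fmul (delta u) r) m))"
    using sw r by (intro actF_sum fin) (auto intro: Fn_fmul_delta_left)
  also have "\<dots> = (\<Sum>u\<in>supp a. sc (a u) (wact X Y u (actF sc X Y r m)))"
    using sw r m by (intro sum.cong) (auto simp: actF_lmul)
  also have "\<dots> = actF sc X Y a (actF sc X Y r m)"
    using fin by (simp add: actF_superset)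
  finally show ?thesis .
qed

lemma actF_deltadiff: "u \<in> words n \<Longrightarrow> v \<in> words n \<Longrightarrow>
   actF sc X Y (\<lambda>w. delta u w - delta v w) m = wact X Y u m - wact X Y v m"
  by (simp add: actF_diff Fn_delta actF_delta)

lemma ideal_sound: "f \<in> Sn_ideal n \<Longrightarrow> \<forall>m\<in>M. actF sc X Y f m = 0"
proof (induction rule: Sn_ideal.induct)
  case (rel r)
  then show ?case
    unfolding Sn_rels_def
    by (auto simp: actF_deltadiff YX comm)
next
  case zero then show ?case by (simp add: actF_zero_fun)
next
  case (add f g) then show ?case by (simp add: actF_add Sn_ideal_Fn)
next
  case (smul f c) then show ?case by (simp add: actF_smul Sn_ideal_Fn)
next
  case (lmul f u) then show ?case by (simp add: actF_lmul Sn_ideal_Fn W_zero)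
next
  case (rmul f u) then show ?case by (simp add: actF_rmul Sn_ideal_Fn W_closed)
qed

end

definition wcong :: "nat \<Rightarrow> 'k::field itself \<Rightarrow> gen list \<Rightarrow> gen list \<Rightarrow> bool" where
  "wcong n T u v \<longleftrightarrow> (\<lambda>w. (delta u w :: 'k) - delta v w) \<in> Sn_ideal n"

lemma wc_refl: "wcong n TYPE('k::field) u u"
  unfolding wcong_def using Sn_ideal.zero by simp

lemma wc_sym: "wcong n TYPE('k::field) u v \<Longrightarrow> wcong n TYPE('k) v u"
  unfolding wcong_def
proof -
  assume "(\<lambda>w. (delta u w :: 'k) - delta v w) \<in> Sn_ideal n"
  from Sn_ideal.smul[OF this, of "-1"]
  show "(\<lambda>w. (delta v w :: 'k) - delta u w) \<in> Sn_ideal n" by simp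
qed

lemma wc_trans: "wcong n TYPE('k::field) u v \<Longrightarrow> wcong n TYPE('k) v x \<Longrightarrow> wcong n TYPE('k) u x"
  unfolding wcong_def
proof -
  assume a: "(\<lambda>w. (delta u w :: 'k) - delta v w) \<in> Sn_ideal n"
    and b: "(\<lambda>w. (delta v w :: 'k) - delta x w) \<in> Sn_ideal n"
  from Sn_ideal.add[OF a b]
  show "(\<lambda>w. (delta u w :: 'k) - delta x w) \<in> Sn_ideal n" by simp
qed

lemma fmul_left_dd: "fmul (delta p) (\<lambda>w. (delta u w :: 'k::field) - delta v w) = (\<lambda>w. delta (p @ u) w - delta (p @ v) w)"
proof
  fix w
  show "fmul (delta p) (\<lambda>w. (delta u w :: 'k::field) - delta v w) w = delta (p @ u) w - delta (p @ v) w"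
  proof (cases "length p \<le> length w \<and> take (length p) w = p")
    case True
    then have w: "w = p @ drop (length p) w" by (metis append_take_drop_id)
    have "(w = p @ u) = (drop (length p) w = u)" "(w = p @ v) = (drop (length p) w = v)"
      using w by (metis append_eq_append_conv)+
    have "fmul (delta p) (\<lambda>w. (delta u w :: 'k::field) - delta v w) w = delta u (drop (length p) w) - delta v (drop (length p) w)"
      using True by (simp add: fmul_delta_left)
    then show ?thesis using True \<open>(w = p @ u) = _\<close> \<open>(w = p @ v) = _\<close> by (simp add: delta_def)
  next
    case False
    then have "w \<noteq> p @ u" "w \<noteq> p @ v" by auto
    have "fmul (delta p) (\<lambda>w. (delta u w :: 'k::field) - delta v w) w = 0"
      using False by (auto simp add: fmul_delta_left)
    then show ?thesis using \<open>w \<noteq> p @ u\<close> \<open>w \<noteq> p @ v\<close> by (simp add: delta_def)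
  qed
qed

lemma fmul_right_dd: "fmul (\<lambda>w. (delta u w :: 'k::field) - delta v w) (delta q) = (\<lambda>w. delta (u @ q) w - delta (v @ q) w)"
proof
  fix w
  show "fmul (\<lambda>w. (delta u w :: 'k::field) - delta v w) (delta q) w = delta (u @ q) w - delta (v @ q) w"
  proof (cases "length q \<le> length w \<and> drop (length w - length q) w = q")
    case True
    then have w: "w = take (length w - length q) w @ q" by (metis append_take_drop_id)
    have "(w = u @ q) = (take (length w - length q) w = u)" "(w = v @ q) = (take (length w - length q) w = v)"
      using w by (metis append_eq_append_conv)+
    have "fmul (\<lambda>w. (delta u w :: 'k::field) - delta v w) (delta q) w = delta u (take (length w - length q) w) - delta v (take (length w - length q) w)"
      using True by (simp add: fmul_delta_right)
    then show ?thesis using True \<open>(w = u @ q) = _\<close> \<open>(w = v @ q) = _\<close> by (simp add: delta_def)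
  next
    case False
    then have "w \<noteq> u @ q" "w \<noteq> v @ q" by auto
    have "fmul (\<lambda>w. (delta u w :: 'k::field) - delta v w) (delta q) w = 0"
      using False by (auto simp add: fmul_delta_right)
    then show ?thesis using \<open>w \<noteq> u @ q\<close> \<open>w \<noteq> v @ q\<close> by (simp add: delta_def)
  qed
qed

lemma wc_ctx: "wcong n TYPE('k::field) u v \<Longrightarrow> p \<in> words n \<Longrightarrow> q \<in> words n \<Longrightarrow>
   wcong n TYPE('k) (p @ u @ q) (p @ v @ q)"
  unfolding wcong_def
proof -
  assume a: "(\<lambda>w. (delta u w :: 'k) - delta v w) \<in> Sn_ideal n" and p: "p \<in> words n" and q: "q \<in> words n"
  from Sn_ideal.rmul[OF a q] have "(\<lambda>w. (delta (u @ q) w :: 'k) - delta (v @ q) w) \<in> Sn_ideal n"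
    by (simp add: fmul_right_dd)
  from Sn_ideal.lmul[OF this p]
  show "(\<lambda>w. (delta (p @ u @ q) w :: 'k) - delta (p @ v @ q) w) \<in> Sn_ideal n"
    by (simp add: fmul_left_dd)
qed

lemma wc_ctxL: "wcong n TYPE('k::field) u v \<Longrightarrow> p \<in> words n \<Longrightarrow> wcong n TYPE('k) (p @ u) (p @ v)"
  using wc_ctx[of n u v p "[]"] by simp
lemma wc_ctxR: "wcong n TYPE('k::field) u v \<Longrightarrow> q \<in> words n \<Longrightarrow> wcong n TYPE('k) (u @ q) (v @ q)"
  using wc_ctx[of n u v "[]" q] by simp

lemma wc_rel: "r \<in> Sn_rels n \<Longrightarrow> r \<in> Sn_ideal n" by (rule Sn_ideal.rel)

lemma wc_YX: "i < n \<Longrightarrow> wcong n TYPE('k::field) [Yg i, Xg i] []"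
  unfolding wcong_def by (rule Sn_ideal.rel) (auto simp: Sn_rels_def)
lemma wc_XY: "i < n \<Longrightarrow> j < n \<Longrightarrow> i \<noteq> j \<Longrightarrow> wcong n TYPE('k::field) [Xg i, Yg j] [Yg j, Xg i]"
  unfolding wcong_def by (rule Sn_ideal.rel) (unfold Sn_rels_def, blast)
lemma wc_XX: "i < n \<Longrightarrow> j < n \<Longrightarrow> i \<noteq> j \<Longrightarrow> wcong n TYPE('k::field) [Xg i, Xg j] [Xg j, Xg i]"
  unfolding wcong_def by (rule Sn_ideal.rel) (unfold Sn_rels_def, blast)
lemma wc_YY: "i < n \<Longrightarrow> j < n \<Longrightarrow> i \<noteq> j \<Longrightarrow> wcong n TYPE('k::field) [Yg i, Yg j] [Yg j, Yg i]"
  unfolding wcong_def by (rule Sn_ideal.rel) (unfold Sn_rels_def, blast)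

lemma wc_commute:
  assumes "gen_idx c < n" "u \<in> words n" "\<forall>l\<in>set u. wcong n TYPE('k::field) [c, l] [l, c]"
  shows "wcong n TYPE('k) (c # u) (u @ [c])"
  using assms
proof (induction u)
  case Nil then show ?case using wc_refl[where 'k='k] by simp
next
  case (Cons l u)
  have 1: "wcong n TYPE('k) (c # l # u) (l # c # u)"
    using wc_ctxR[where 'k='k, of n "[c, l]" "[l, c]" u] Cons by simp
  have 2: "wcong n TYPE('k) (l # c # u) (l # u @ [c])"
    using wc_ctxL[where 'k='k, of n "c # u" "u @ [c]" "[l]"] Cons by simp
  show ?case using wc_trans[OF 1 2] by simp
qed

fun lsk :: "(nat \<Rightarrow> gen) \<Rightarrow> nat \<Rightarrow> (nat \<Rightarrow> nat) \<Rightarrow> gen list" where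
  "lsk L 0 a = []"
| "lsk L (Suc k) a = replicate (a k) (L k) @ lsk L k a"

lemma lsk_upd: "k \<le> j \<Longrightarrow> lsk L k (a(j := x)) = lsk L k a"
  by (induction k) auto

lemma lsk_words: "(\<And>j. gen_idx (L j) = j) \<Longrightarrow> k \<le> n \<Longrightarrow> lsk L k a \<in> words n"
  by (induction k) (auto simp: words_def)

lemma lsk_zero: "lsk L k (\<lambda>_. 0) = []"
  by (induction k) auto

lemma push_same:
  assumes Lidx: "\<And>j. gen_idx (L j) = j"
    and Lcomm: "\<And>i j. i < n \<Longrightarrow> j < n \<Longrightarrow> i \<noteq> j \<Longrightarrow> wcong n TYPE('k::field) [L i, L j] [L j, L i]"
  shows "i < k \<Longrightarrow> k \<le> n \<Longrightarrow> wcong n TYPE('k) (L i # lsk L k a) (lsk L k (a(i := a i + 1)))"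
proof (induction k)
  case 0 then show ?case by simp
next
  case (Suc k)
  show ?case
  proof (cases "i = k")
    case True
    have e: "lsk L (Suc k) (a(k := a k + 1)) = replicate (a k + 1) (L k) @ lsk L k a"
      by (simp only: lsk.simps fun_upd_same lsk_upd[of k k] le_refl)
    show ?thesis unfolding True e using wc_refl[where 'k='k] by simp
  next
    case False
    then have ik: "i < k" using Suc by auto
    let ?R = "replicate (a k) (L k)"
    have Rw: "?R \<in> words n" using Suc Lidx by (auto simp: words_def)
    have rw: "lsk L k a \<in> words n" using Suc by (auto intro: lsk_words Lidx)
    have 1: "wcong n TYPE('k) (L i # ?R) (?R @ [L i])"
      using Suc Rw False by (intro wc_commute) (auto simp: Lidx intro: Lcomm)
    have 2: "wcong n TYPE('k) (L i # ?R @ lsk L k a) (?R @ L i # lsk L k a)"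
      using wc_ctxR[OF 1 rw] by simp
    have kn: "k \<le> n" using Suc.prems by simp
    have 3: "wcong n TYPE('k) (?R @ L i # lsk L k a) (?R @ lsk L k (a(i := a i + 1)))"
      by (rule wc_ctxL[OF Suc.IH[OF ik kn] Rw])
    have e: "lsk L (Suc k) (a(i := a i + 1)) = ?R @ lsk L k (a(i := a i + 1))"
      using False by simp
    show ?thesis unfolding e using wc_trans[OF 2 3] by (simp only: lsk.simps)
  qed
qed

lemma push_X: "i < k \<Longrightarrow> k \<le> n \<Longrightarrow> wcong n TYPE('k::field) (Xg i # lsk Xg k a) (lsk Xg k (a(i := a i + 1)))"
  by (rule push_same) (auto intro: wc_XX)
lemma push_Y: "i < k \<Longrightarrow> k \<le> n \<Longrightarrow> wcong n TYPE('k::field) (Yg i # lsk Yg k a) (lsk Yg k (a(i := a i + 1)))"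
  by (rule push_same) (auto intro: wc_YY)

lemma Y_past_X:
  assumes "i < n"
  shows "k \<le> n \<Longrightarrow> wcong n TYPE('k::field) (Yg i # lsk Xg k a)
     (if i < k \<and> 1 \<le> a i then lsk Xg k (a(i := a i - 1)) else lsk Xg k a @ [Yg i])"
proof (induction k)
  case 0 then show ?case using wc_refl[where 'k='k] by simp
next
  case (Suc k)
  let ?R = "replicate (a k) (Xg k)"
  have Rw: "?R \<in> words n" using Suc by (auto simp: words_def)
  have rw: "lsk Xg k a \<in> words n" by (rule lsk_words) (use Suc.prems in auto)
  show ?case
  proof (cases "i = k")
    case True
    show ?thesis
    proof (cases "1 \<le> a k")
      case True
      then obtain r where ak: "a k = Suc r" by (cases "a k") auto
      have "replicate r (Xg k) \<in> words n" using Suc.prems by (auto simp: words_def)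
      then have rw': "replicate r (Xg k) @ lsk Xg k a \<in> words n" using rw by simp
      have "wcong n TYPE('k) ([] @ [Yg k, Xg k] @ (replicate r (Xg k) @ lsk Xg k a)) ([] @ [] @ (replicate r (Xg k) @ lsk Xg k a))"
        by (rule wc_ctx[OF wc_YX]) (use Suc rw' in auto)
      moreover have "lsk Xg (Suc k) (a(k := a k - 1)) = replicate r (Xg k) @ lsk Xg k a"
        using ak by (simp only: lsk.simps fun_upd_same lsk_upd[of k k] le_refl) simp
      ultimately show ?thesis using True \<open>i = k\<close> ak by simp
    next
      case False
      then have "a k = 0" by simp
      then show ?thesis using Suc.IH Suc.prems \<open>i = k\<close> by simp
    qed
  next
    case False
    have 1: "wcong n TYPE('k) (Yg i # ?R) (?R @ [Yg i])"
      using Suc Rw False assms by (intro wc_commute) (auto intro: wc_sym[OF wc_XY])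
    have 2: "wcong n TYPE('k) (Yg i # ?R @ lsk Xg k a) (?R @ Yg i # lsk Xg k a)"
      using wc_ctxR[OF 1 rw] by simp
    have 3: "wcong n TYPE('k) (?R @ Yg i # lsk Xg k a) (?R @ (if i < k \<and> 1 \<le> a i then lsk Xg k (a(i := a i - 1)) else lsk Xg k a @ [Yg i]))"
      by (rule wc_ctxL[OF Suc.IH Rw]) (use Suc.prems in simp)
    have c: "(i < Suc k \<and> 1 \<le> a i) = (i < k \<and> 1 \<le> a i)" using False by auto
    have neq: "k \<noteq> i" using False by simp
    show ?thesis unfolding c using wc_trans[OF 2 3]
      by (cases "i < k \<and> 1 \<le> a i") (simp_all only: simp_thms if_True if_False lsk.simps fun_upd_other[OF neq] append_assoc append_Cons)
  qed
qed

fun nf :: "gen list \<Rightarrow> (nat \<Rightarrow> nat) \<times> (nat \<Rightarrow> nat)" where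
  "nf [] = (\<lambda>_. 0, \<lambda>_. 0)"
| "nf (Xg i # w) = (case nf w of (a, b) \<Rightarrow> (a(i := a i + 1), b))"
| "nf (Yg i # w) = (case nf w of (a, b) \<Rightarrow> if 1 \<le> a i then (a(i := a i - 1), b) else (a, b(i := b i + 1)))"

definition nw :: "nat \<Rightarrow> (nat \<Rightarrow> nat) \<times> (nat \<Rightarrow> nat) \<Rightarrow> gen list" where
  "nw n ab = lsk Xg n (fst ab) @ lsk Yg n (snd ab)"

lemma nw_words: "nw n ab \<in> words n"
  by (auto simp: nw_def intro: lsk_words)

lemma nf_supp: "w \<in> words n \<Longrightarrow> n \<le> j \<Longrightarrow> fst (nf w) j = 0 \<and> snd (nf w) j = 0"
proof (induction w rule: nf.induct)
  case 1 then show ?case by simp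
next
  case (2 i w) then show ?case by (auto split: prod.splits)
next
  case (3 i w) then show ?case by (auto split: prod.splits)
qed

lemma nf_cong: "w \<in> words n \<Longrightarrow> wcong n TYPE('k::field) w (nw n (nf w))"
proof (induction w rule: nf.induct)
  case 1 then show ?case by (simp add: nw_def lsk_zero wc_refl)
next
  case (2 i w)
  obtain a b where ab: "nf w = (a, b)" by fastforce
  have i: "i < n" and w: "w \<in> words n" using 2 by auto
  have 1: "wcong n TYPE('k) (Xg i # w) (Xg i # lsk Xg n a @ lsk Yg n b)"
    using wc_ctxL[OF 2(1)[OF w] , of "[Xg i]"] i ab by (simp add: nw_def)
  have 2: "wcong n TYPE('k) (Xg i # lsk Xg n a @ lsk Yg n b) (lsk Xg n (a(i := a i + 1)) @ lsk Yg n b)"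
    using wc_ctxR[OF push_X[OF i order.refl], of "lsk Yg n b" a] by (simp add: lsk_words)
  show ?case using wc_trans[OF 1 2] ab by (simp add: nw_def)
next
  case (3 i w)
  obtain a b where ab: "nf w = (a, b)" by fastforce
  have i: "i < n" and w: "w \<in> words n" using 3 by auto
  have 1: "wcong n TYPE('k) (Yg i # w) (Yg i # lsk Xg n a @ lsk Yg n b)"
    using wc_ctxL[OF 3(1)[OF w] , of "[Yg i]"] i ab by (simp add: nw_def)
  have 2: "wcong n TYPE('k) (Yg i # lsk Xg n a @ lsk Yg n b)
     ((if 1 \<le> a i then lsk Xg n (a(i := a i - 1)) else lsk Xg n a @ [Yg i]) @ lsk Yg n b)"
    using wc_ctxR[OF Y_past_X[OF i order.refl], of "lsk Yg n b" a] i by (simp add: lsk_words)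
  show ?case
  proof (cases "1 \<le> a i")
    case True
    then show ?thesis using wc_trans[OF 1 2] ab by (simp add: nw_def)
  next
    case False
    have c2: "wcong n TYPE('k) (Yg i # w) (lsk Xg n a @ Yg i # lsk Yg n b)"
      using wc_trans[OF 1 2] False by simp
    have 3: "wcong n TYPE('k) (lsk Xg n a @ Yg i # lsk Yg n b) (lsk Xg n a @ lsk Yg n (b(i := b i + 1)))"
      using wc_ctxL[OF push_Y[OF i order.refl], of "lsk Xg n a" b] by (simp add: lsk_words)
    show ?thesis using wc_trans[OF c2 3] ab False by (simp add: nw_def)
  qed
qed


context smod begin
lemma wcong_act: "wcong n TYPE('k) u v \<Longrightarrow> u \<in> words n \<Longrightarrow> v \<in> words n \<Longrightarrow> m \<in> M \<Longrightarrow>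
  wact X Y u m = wact X Y v m"
  using ideal_sound[of "\<lambda>w. delta u w - delta v w"] actF_deltadiff[of u v m]
  unfolding wcong_def by auto
end

lemma Pscale_vs: "vector_space (Pscale :: 'k::field \<Rightarrow> ((nat \<Rightarrow> nat) \<Rightarrow> 'k) \<Rightarrow> _)"
  by unfold_locales (auto simp: Pscale_def fun_eq_iff algebra_simps)

lemma Pn_iff: "p \<in> Pn n \<longleftrightarrow> finite {\<alpha>. p \<alpha> \<noteq> 0} \<and> (\<forall>\<alpha>. p \<alpha> \<noteq> 0 \<longrightarrow> (\<forall>i\<ge>n. \<alpha> i = 0))"
  by (simp add: Pn_def)

lemma Pn_zero: "(0 :: (nat \<Rightarrow> nat) \<Rightarrow> 'k::field) \<in> Pn n"
  by (simp add: Pn_iff)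

lemma Pn_add: "p \<in> Pn n \<Longrightarrow> q \<in> Pn n \<Longrightarrow> p + q \<in> Pn n"
proof -
  assume p: "p \<in> Pn n" and q: "q \<in> Pn n"
  have "{\<alpha>. (p + q) \<alpha> \<noteq> 0} \<subseteq> {\<alpha>. p \<alpha> \<noteq> 0} \<union> {\<alpha>. q \<alpha> \<noteq> 0}" by auto
  moreover have "\<forall>\<alpha>. (p + q) \<alpha> \<noteq> 0 \<longrightarrow> (\<forall>i\<ge>n. \<alpha> i = 0)"
    using p q unfolding Pn_iff by (metis add.right_neutral plus_fun_apply)
  ultimately show ?thesis using p q unfolding Pn_iff by (meson finite_UnI finite_subset)
qed

lemma Pn_scale: "p \<in> Pn n \<Longrightarrow> Pscale c p \<in> Pn n"
proof -
  assume p: "p \<in> Pn n"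
  have "{\<alpha>. Pscale c p \<alpha> \<noteq> 0} \<subseteq> {\<alpha>. p \<alpha> \<noteq> 0}" by (auto simp: Pscale_def)
  then show ?thesis using p unfolding Pn_iff by (auto simp: Pscale_def intro: finite_subset)
qed

lemma Pn_xop: "i < n \<Longrightarrow> p \<in> Pn n \<Longrightarrow> xop i p \<in> Pn n"
proof -
  assume i: "i < n" and p: "p \<in> Pn n"
  have "{\<alpha>. xop i p \<alpha> \<noteq> 0} \<subseteq> (\<lambda>\<beta>. \<beta>(i := \<beta> i + 1)) ` {\<alpha>. p \<alpha> \<noteq> 0}"
  proof
    fix \<alpha> assume "\<alpha> \<in> {\<alpha>. xop i p \<alpha> \<noteq> 0}"
    then have h: "1 \<le> \<alpha> i" "p (\<alpha>(i := \<alpha> i - 1)) \<noteq> 0" by (auto simp: xop_def split: if_splits)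
    have "\<alpha> = (\<alpha>(i := \<alpha> i - 1))(i := (\<alpha>(i := \<alpha> i - 1)) i + 1)" using h by (auto simp: fun_eq_iff)
    then show "\<alpha> \<in> (\<lambda>\<beta>. \<beta>(i := \<beta> i + 1)) ` {\<alpha>. p \<alpha> \<noteq> 0}" using h by blast
  qed
  moreover have "\<forall>\<alpha>. xop i p \<alpha> \<noteq> 0 \<longrightarrow> (\<forall>j\<ge>n. \<alpha> j = 0)"
  proof (intro allI impI)
    fix \<alpha> j assume "xop i p \<alpha> \<noteq> 0" "n \<le> j"
    then have "p (\<alpha>(i := \<alpha> i - 1)) \<noteq> 0" "j \<noteq> i" using i by (auto simp: xop_def split: if_splits)
    then show "\<alpha> j = 0" using p \<open>n \<le> j\<close> unfolding Pn_iff by (metis fun_upd_other)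
  qed
  ultimately show ?thesis using p unfolding Pn_iff by (meson finite_imageI finite_subset)
qed

lemma Pn_yop: "i < n \<Longrightarrow> p \<in> Pn n \<Longrightarrow> yop i p \<in> Pn n"
proof -
  assume i: "i < n" and p: "p \<in> Pn n"
  have "{\<alpha>. yop i p \<alpha> \<noteq> 0} \<subseteq> (\<lambda>\<beta>. \<beta>(i := \<beta> i - 1)) ` {\<alpha>. p \<alpha> \<noteq> 0}"
  proof
    fix \<alpha> assume "\<alpha> \<in> {\<alpha>. yop i p \<alpha> \<noteq> 0}"
    then have h: "p (\<alpha>(i := \<alpha> i + 1)) \<noteq> 0" by (auto simp: yop_def)
    have "\<alpha> = (\<alpha>(i := \<alpha> i + 1))(i := (\<alpha>(i := \<alpha> i + 1)) i - 1)" by (auto simp: fun_eq_iff)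
    then show "\<alpha> \<in> (\<lambda>\<beta>. \<beta>(i := \<beta> i - 1)) ` {\<alpha>. p \<alpha> \<noteq> 0}" using h by blast
  qed
  moreover have "\<forall>\<alpha>. yop i p \<alpha> \<noteq> 0 \<longrightarrow> (\<forall>j\<ge>n. \<alpha> j = 0)"
  proof (intro allI impI)
    fix \<alpha> j assume "yop i p \<alpha> \<noteq> 0" "n \<le> j"
    then have "p (\<alpha>(i := \<alpha> i + 1)) \<noteq> 0" "j \<noteq> i" using i by (auto simp: yop_def)
    then show "\<alpha> j = 0" using p \<open>n \<le> j\<close> unfolding Pn_iff by (metis fun_upd_other)
  qed
  ultimately show ?thesis using p unfolding Pn_iff by (meson finite_imageI finite_subset)
qed

lemma Pn_module: "Sn_module n (Pscale :: 'k::field \<Rightarrow> _) (Pn n) xop yop"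
  unfolding Sn_module_def
proof (intro conjI)
  show "vector_space (Pscale :: 'k::field \<Rightarrow> _)" by (rule Pscale_vs)
  interpret P: vector_space "Pscale :: 'k::field \<Rightarrow> _" by (rule Pscale_vs)
  show "module.subspace (Pscale :: 'k::field \<Rightarrow> _) (Pn n)"
    unfolding P.subspace_def
    by (auto intro: Pn_zero Pn_add Pn_scale)
  show "\<forall>i<n. \<forall>m\<in>Pn n. xop i m \<in> Pn n \<and> yop i m \<in> Pn n" by (auto intro: Pn_xop Pn_yop)
  show "\<forall>i<n. \<forall>m\<in>Pn n. \<forall>m'\<in>Pn n. xop i (m + m') = xop i m + xop i m' \<and> yop i (m + m') = yop i m + yop i m'"
    by (auto simp: xop_def yop_def fun_eq_iff)
  show "\<forall>i<n. \<forall>c. \<forall>m\<in>Pn n. xop i (Pscale c m) = Pscale c (xop i m) \<and> yop i (Pscale c m) = Pscale c (yop i m)"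
    by (auto simp: xop_def yop_def Pscale_def fun_eq_iff)
  show "\<forall>i<n. \<forall>m\<in>Pn n. yop i (xop i m) = m"
    by (auto simp: xop_def yop_def fun_eq_iff)
  show "\<forall>i<n. \<forall>j<n. i \<noteq> j \<longrightarrow> (\<forall>m\<in>Pn n. xop i (yop j m) = yop j (xop i m) \<and>
      xop i (xop j m) = xop j (xop i m) \<and> yop i (yop j m) = yop j (yop i m))"
    by (auto simp: xop_def yop_def fun_eq_iff fun_upd_twist)
qed

lemma wact_repX: "wact xop yop (replicate m (Xg i)) p = (\<lambda>\<gamma>. if m \<le> \<gamma> i then p (\<gamma>(i := \<gamma> i - m)) else 0)"
  by (induction m) (auto simp: xop_def fun_eq_iff)

lemma wact_repY: "wact xop yop (replicate m (Yg i)) p = (\<lambda>\<gamma>. p (\<gamma>(i := \<gamma> i + m)))"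
  by (induction m) (auto simp: yop_def fun_eq_iff intro!: arg_cong[where f=p])

lemma wact_lskX: "wact xop yop (lsk Xg k a) p = (\<lambda>\<gamma>. if (\<forall>j<k. a j \<le> \<gamma> j) then p (\<lambda>j. if j < k then \<gamma> j - a j else \<gamma> j) else 0)"
proof (induction k)
  case 0 then show ?case by simp
next
  case (Suc k)
  show ?case
  proof
    fix \<gamma> :: "nat \<Rightarrow> nat"
    have c: "(a k \<le> \<gamma> k \<and> (\<forall>j<k. a j \<le> (\<gamma>(k := \<gamma> k - a k)) j)) = (\<forall>j<Suc k. a j \<le> \<gamma> j)"
      by (auto simp: less_Suc_eq)
    have f: "(\<lambda>j. if j < k then (\<gamma>(k := \<gamma> k - a k)) j - a j else (\<gamma>(k := \<gamma> k - a k)) j) = (\<lambda>j. if j < Suc k then \<gamma> j - a j else \<gamma> j)"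
      by (auto simp: fun_eq_iff less_Suc_eq)
    show "wact xop yop (lsk Xg (Suc k) a) p \<gamma> = (if (\<forall>j<Suc k. a j \<le> \<gamma> j) then p (\<lambda>j. if j < Suc k then \<gamma> j - a j else \<gamma> j) else 0)"
      using c f by (auto simp: wact_append wact_repX Suc.IH)
  qed
qed

lemma wact_lskY: "wact xop yop (lsk Yg k b) p = (\<lambda>\<gamma>. p (\<lambda>j. if j < k then \<gamma> j + b j else \<gamma> j))"
proof (induction k)
  case 0 then show ?case by simp
next
  case (Suc k)
  show ?case
  proof
    fix \<gamma> :: "nat \<Rightarrow> nat"
    have f: "(\<lambda>j. if j < k then (\<gamma>(k := \<gamma> k + b k)) j + b j else (\<gamma>(k := \<gamma> k + b k)) j) = (\<lambda>j. if j < Suc k then \<gamma> j + b j else \<gamma> j)"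
      by (auto simp: fun_eq_iff less_Suc_eq)
    show "wact xop yop (lsk Yg (Suc k) b) p \<gamma> = p (\<lambda>j. if j < Suc k then \<gamma> j + b j else \<gamma> j)"
      using f by (simp add: wact_append wact_repY Suc.IH)
  qed
qed

definition mon :: "(nat \<Rightarrow> nat) \<Rightarrow> (nat \<Rightarrow> nat) \<Rightarrow> 'k::field" where
  "mon \<beta> = (\<lambda>\<gamma>. if \<gamma> = \<beta> then 1 else 0)"

lemma mon_Pn: "(\<forall>j\<ge>n. \<beta> j = 0) \<Longrightarrow> mon \<beta> \<in> Pn n"
  by (auto simp: Pn_iff mon_def)

lemma mon_nz: "(mon \<beta> :: (nat \<Rightarrow> nat) \<Rightarrow> 'k::field) \<noteq> 0"
  by (auto simp: mon_def fun_eq_iff)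

lemma sum_fun_apply: "(sum g S) x = (\<Sum>s\<in>S. g s x)"
  by (induction S rule: infinite_finite_induct) auto

lemma smod_Pn: "smod n (Pscale :: 'k::field \<Rightarrow> _) (Pn n) xop yop"
  by (rule smod.intro, rule Pn_module)

lemma V_formula:
  "wact xop yop (nw n (a, b)) (mon b0) a0 = (if (\<forall>j<n. a j \<le> a0 j) \<and> (\<forall>j. (if j < n then a0 j - a j + b j else a0 j) = b0 j) then (1::'k::field) else 0)"
  by (auto simp: nw_def wact_append wact_lskX wact_lskY mon_def fun_eq_iff)


theorem Pn_faithful: "Sn_faithful n (Pscale :: 'k::field \<Rightarrow> _) (Pn n) xop yop"
  unfolding Sn_faithful_def
proof (intro ballI impI)
  fix f :: "gen list \<Rightarrow> 'k"
  assume fF: "f \<in> Fn n" and ann: "\<forall>m\<in>Pn n. actF Pscale xop yop f m = 0"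
  define S where "S = supp f"
  have finS: "finite S" and Sw: "S \<subseteq> words n" using fF by (auto simp: Fn_iff S_def)
  define C where "C ab = (\<Sum>w\<in>{w\<in>S. nf w = ab}. f w)" for ab
  define T where "T = nf ` S"
  have finT: "finite T" using finS by (simp add: T_def)
  have Tsupp: "fst ab j = 0 \<and> snd ab j = 0" if abT: "ab \<in> T" and jn: "n \<le> j" for ab j
  proof -
    obtain w where "w \<in> S" "ab = nf w" using abT unfolding T_def by blast
    then show ?thesis using nf_supp[of w n j] Sw jn by auto
  qed
  define deg where "deg b = (\<Sum>j<n. b j)" for b :: "nat \<Rightarrow> nat"
  have group: "(\<Sum>w\<in>S. f w * G (nf w)) = (\<Sum>ab\<in>T. C ab * G ab)" for G :: "_ \<Rightarrow> 'k"
  proof -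
    have "(\<Sum>w\<in>S. f w * G (nf w)) = (\<Sum>ab\<in>T. \<Sum>w\<in>{w\<in>S. nf w = ab}. f w * G (nf w))"
      unfolding T_def by (rule sum.image_gen[OF finS])
    also have "\<dots> = (\<Sum>ab\<in>T. C ab * G ab)"
      unfolding C_def sum_distrib_right by (intro sum.cong refl) auto
    finally show ?thesis .
  qed
  have Czero: "\<forall>ab\<in>T. C ab = 0"
  proof (rule ccontr)
    assume "\<not> (\<forall>ab\<in>T. C ab = 0)"
    then obtain ab1 where "ab1 \<in> T \<and> C ab1 \<noteq> 0" by auto
    from ex_has_least_nat[of "\<lambda>ab. ab \<in> T \<and> C ab \<noteq> 0", OF this, of "\<lambda>ab. deg (snd ab)"]
    obtain ab0 where ab0: "ab0 \<in> T" "C ab0 \<noteq> 0"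
      and minab: "\<And>ab. ab \<in> T \<Longrightarrow> C ab \<noteq> 0 \<Longrightarrow> deg (snd ab0) \<le> deg (snd ab)" by blast
    obtain a0 b0 where ab0e: "ab0 = (a0, b0)" by fastforce
    define p where "p = (mon b0 :: (nat \<Rightarrow> nat) \<Rightarrow> 'k)"
    have pP: "p \<in> Pn n" using Tsupp[OF ab0(1)] ab0e unfolding p_def by (intro mon_Pn) auto
    have eqw: "wact xop yop w p = wact xop yop (nw n (nf w)) p" if "w \<in> S" for w
      using smod.wcong_act[OF smod_Pn nf_cong] that Sw pP nw_words by blast
    define V where "V ab = wact xop yop (nw n ab) p a0" for ab
    have "0 = actF Pscale xop yop f p a0" using ann pP by simp
    also have "\<dots> = (\<Sum>w\<in>S. f w * V (nf w))"
      unfolding actF_def S_def supp_def[symmetric] sum_fun_apply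
      using eqw by (simp add: Pscale_def V_def S_def)
    also have "\<dots> = (\<Sum>ab\<in>T. C ab * V ab)" by (rule group)
    also have "\<dots> = C ab0 * V ab0 + (\<Sum>ab\<in>T - {ab0}. C ab * V ab)"
      using ab0(1) finT by (simp add: sum.remove)
    also have "(\<Sum>ab\<in>T - {ab0}. C ab * V ab) = 0"
    proof (rule sum.neutral, rule ballI)
      fix ab assume abT: "ab \<in> T - {ab0}"
      obtain a b where abe: "ab = (a, b)" by fastforce
      show "C ab * V ab = 0"
      proof (rule ccontr)
        assume "C ab * V ab \<noteq> 0"
        then have Cn: "C ab \<noteq> 0" and Vn: "V ab \<noteq> 0" by auto
        from Vn have h1: "\<forall>j<n. a j \<le> a0 j" and h2: "\<forall>j. (if j < n then a0 j - a j + b j else a0 j) = b0 j"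
          unfolding V_def p_def abe by (auto simp: V_formula split: if_splits)
        have ble: "\<forall>j\<in>{..<n}. b j \<le> b0 j"
        proof
          fix j assume "j \<in> {..<n}"
          then have "a0 j - a j + b j = b0 j" using h2 by (metis lessThan_iff)
          then show "b j \<le> b0 j" by linarith
        qed
        have "deg b0 \<le> deg b" using minab[of ab] abT Cn abe ab0e by auto
        have beq: "\<forall>j<n. b j = b0 j"
        proof (rule ccontr)
          assume "\<not> (\<forall>j<n. b j = b0 j)"
          then obtain j where "j < n" "b j \<noteq> b0 j" by auto
          then have "deg b < deg b0" unfolding deg_def
            using ble by (intro sum_strict_mono_ex1) (auto intro: le_neq_implies_less)
          with \<open>deg b0 \<le> deg b\<close> show False by simp
        qed
        have aeq: "\<forall>j<n. a j = a0 j"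
        proof (intro allI impI)
          fix j assume "j < n"
          then have "a0 j - a j + b j = b0 j" "b j = b0 j" "a j \<le> a0 j" using h2 beq h1 by metis+
          then show "a j = a0 j" by linarith
        qed
        have "a = a0" "b = b0"
        proof -
          show "a = a0"
          proof
            fix j show "a j = a0 j"
              using aeq Tsupp[OF abT[THEN DiffD1]] Tsupp[OF ab0(1)] abe ab0e by (cases "j < n") auto
          qed
          show "b = b0"
          proof
            fix j show "b j = b0 j"
              using beq Tsupp[OF abT[THEN DiffD1]] Tsupp[OF ab0(1)] abe ab0e by (cases "j < n") auto
          qed
        qed
        then show False using abT abe ab0e by auto
      qed
    qed
    also have "V ab0 = 1"
    proof -
      have "\<forall>j. (if j < n then a0 j - a0 j + b0 j else a0 j) = b0 j"
        using Tsupp[OF ab0(1)] ab0e by auto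
      then show ?thesis unfolding V_def p_def ab0e by (simp add: V_formula)
    qed
    finally show False using ab0(2) by simp
  qed
  define D where "D u = (\<lambda>w. (delta u w :: 'k) - delta (nw n (nf u)) w)" for u
  have Di: "D u \<in> Sn_ideal n" if "u \<in> S" for u
    using nf_cong[of u n, where 'k='k] that Sw unfolding wcong_def D_def by auto
  have "(\<lambda>w. \<Sum>u\<in>S. f u * D u w) \<in> Sn_ideal n"
    by (rule Sn_ideal_sum[OF finS Di])
  moreover have "(\<lambda>w. \<Sum>u\<in>S. f u * D u w) = f"
  proof
    fix w
    have "(\<Sum>u\<in>S. f u * D u w) = (\<Sum>u\<in>S. f u * delta u w) - (\<Sum>u\<in>S. f u * delta (nw n (nf u)) w)"
      unfolding D_def by (simp add: right_diff_distrib sum_subtractf)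
    also have "(\<Sum>u\<in>S. f u * delta u w) = f w"
    proof -
      have "(\<Sum>u\<in>S. f u * delta u w) = (\<Sum>u\<in>S. if w = u then f w else 0)"
        by (intro sum.cong refl) (auto simp: delta_def)
      also have "\<dots> = f w" using finS by (simp add: S_def supp_def)
      finally show ?thesis .
    qed
    also have "(\<Sum>u\<in>S. f u * delta (nw n (nf u)) w) = (\<Sum>ab\<in>T. C ab * delta (nw n ab) w)"
      by (rule group)
    also have "\<dots> = 0" using Czero by simp
    finally show "(\<Sum>u\<in>S. f u * D u w) = f w" by simp
  qed
  ultimately show "f \<in> Sn_ideal n" by simp
qed


lemma Pn_vanish: "p \<in> Pn n \<Longrightarrow> p \<alpha> \<noteq> 0 \<Longrightarrow> n \<le> j \<Longrightarrow> \<alpha> j = 0"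
  by (auto simp: Pn_iff)

lemma wact_sub_closed:
  assumes U: "\<forall>i<n. \<forall>u\<in>U. xop i u \<in> U \<and> yop i u \<in> U"
  shows "w \<in> words n \<Longrightarrow> p \<in> U \<Longrightarrow> wact xop yop w p \<in> U"
proof (induction w)
  case Nil then show ?case by simp
next
  case (Cons a w) then show ?case using U by (cases a) auto
qed

lemma mon_gen: "(\<forall>j\<ge>n. \<gamma> j = 0) \<Longrightarrow> wact xop yop (lsk Xg n \<gamma>) (mon (\<lambda>_. 0) :: _ \<Rightarrow> 'k::field) = mon \<gamma>"
proof
  fix \<delta> :: "nat \<Rightarrow> nat"
  assume g: "\<forall>j\<ge>n. \<gamma> j = 0"
  have "((\<forall>j<n. \<gamma> j \<le> \<delta> j) \<and> (\<lambda>j. if j < n then \<delta> j - \<gamma> j else \<delta> j) = (\<lambda>_. 0)) = (\<delta> = \<gamma>)"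
  proof
    assume h: "(\<forall>j<n. \<gamma> j \<le> \<delta> j) \<and> (\<lambda>j. if j < n then \<delta> j - \<gamma> j else \<delta> j) = (\<lambda>_. 0)"
    show "\<delta> = \<gamma>"
    proof
      fix j
      have e: "(if j < n then \<delta> j - \<gamma> j else \<delta> j) = 0" using h by metis
      show "\<delta> j = \<gamma> j"
      proof (cases "j < n")
        case True then have "\<delta> j - \<gamma> j = 0" "\<gamma> j \<le> \<delta> j" using e h by auto
        then show ?thesis by linarith
      next
        case False then show ?thesis using e g by auto
      qed
    qed
  next
    assume "\<delta> = \<gamma>" then show "(\<forall>j<n. \<gamma> j \<le> \<delta> j) \<and> (\<lambda>j. if j < n then \<delta> j - \<gamma> j else \<delta> j) = (\<lambda>_. 0)"
      using g by (auto simp: fun_eq_iff)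
  qed
  note E = this
  have "wact xop yop (lsk Xg n \<gamma>) (mon (\<lambda>_. 0) :: _ \<Rightarrow> 'k::field) \<delta> =
     (if (\<forall>j<n. \<gamma> j \<le> \<delta> j) \<and> (\<lambda>j. if j < n then \<delta> j - \<gamma> j else \<delta> j) = (\<lambda>_. 0) then 1 else 0)"
    by (simp add: wact_lskX mon_def)
  also have "\<dots> = mon \<gamma> \<delta>" unfolding E mon_def by simp
  finally show "wact xop yop (lsk Xg n \<gamma>) (mon (\<lambda>_. 0) :: _ \<Rightarrow> 'k::field) \<delta> = mon \<gamma> \<delta>" .
qed

lemma Pn_expand: "p \<in> Pn n \<Longrightarrow> p = (\<Sum>\<gamma>\<in>{\<alpha>. p \<alpha> \<noteq> 0}. Pscale (p \<gamma>) (mon \<gamma>))"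
proof
  fix \<delta>
  assume p: "p \<in> Pn n"
  have fin: "finite {\<alpha>. p \<alpha> \<noteq> 0}" using p by (simp add: Pn_iff)
  have "(\<Sum>\<gamma>\<in>{\<alpha>. p \<alpha> \<noteq> 0}. Pscale (p \<gamma>) (mon \<gamma>)) \<delta> = (\<Sum>\<gamma>\<in>{\<alpha>. p \<alpha> \<noteq> 0}. if \<delta> = \<gamma> then p \<delta> else 0)"
    unfolding sum_fun_apply by (intro sum.cong refl) (auto simp: Pscale_def mon_def)
  also have "\<dots> = p \<delta>" using fin by (simp add: sum.delta)
  finally show "p \<delta> = (\<Sum>\<gamma>\<in>{\<alpha>. p \<alpha> \<noteq> 0}. Pscale (p \<gamma>) (mon \<gamma>)) \<delta>" by simp
qed

theorem Pn_simple: "Sn_simple n (Pscale :: 'k::field \<Rightarrow> _) (Pn n) xop yop"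
  unfolding Sn_simple_def
proof (intro conjI allI impI)
  interpret P: vector_space "Pscale :: 'k::field \<Rightarrow> _" by (rule Pscale_vs)
  have m0: "(mon (\<lambda>_. 0) :: _ \<Rightarrow> 'k) \<in> Pn n" by (rule mon_Pn) auto
  then show "Pn n \<noteq> {0 :: _ \<Rightarrow> 'k}" using mon_nz by blast
  fix U :: "((nat \<Rightarrow> nat) \<Rightarrow> 'k) set"
  assume "P.subspace U \<and> U \<subseteq> Pn n \<and> (\<forall>i<n. \<forall>u\<in>U. xop i u \<in> U \<and> yop i u \<in> U)"
  then have sU: "P.subspace U" and UP: "U \<subseteq> Pn n" and cU: "\<forall>i<n. \<forall>u\<in>U. xop i u \<in> U \<and> yop i u \<in> U"
    by auto
  show "U = {0} \<or> U = Pn n"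
  proof (cases "U = {0}")
    case True then show ?thesis by simp
  next
    case False
    then obtain p where pU: "p \<in> U" and pnz: "p \<noteq> 0" using P.subspace_0[OF sU] by blast
    have pP: "p \<in> Pn n" using pU UP by auto
    define Sp where "Sp = {\<alpha>. p \<alpha> \<noteq> 0}"
    have finSp: "finite Sp" using pP by (simp add: Pn_iff Sp_def)
    have neSp: "Sp \<noteq> {}" using pnz by (auto simp: Sp_def fun_eq_iff)
    define deg where "deg \<alpha> = (\<Sum>j<n. \<alpha> j)" for \<alpha> :: "nat \<Rightarrow> nat"
    obtain \<alpha>0 where a0: "\<alpha>0 \<in> Sp" and a0max: "\<And>\<alpha>. \<alpha> \<in> Sp \<Longrightarrow> deg \<alpha> \<le> deg \<alpha>0"
    proof -
      have "Max (deg ` Sp) \<in> deg ` Sp" using finSp neSp by simp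
      then obtain \<alpha>0 where "\<alpha>0 \<in> Sp" "deg \<alpha>0 = Max (deg ` Sp)" by auto
      then show ?thesis using that finSp by (metis Max_ge finite_imageI image_eqI)
    qed
    define q where "q = wact xop yop (lsk Yg n \<alpha>0) p"
    have qU: "q \<in> U" unfolding q_def by (rule wact_sub_closed[OF cU _ pU]) (auto intro: lsk_words)
    have qeq: "q = Pscale (p \<alpha>0) (mon (\<lambda>_. 0))"
    proof
      fix \<gamma> :: "nat \<Rightarrow> nat"
      define \<beta> where "\<beta> = (\<lambda>j. if j < n then \<gamma> j + \<alpha>0 j else \<gamma> j)"
      have qg: "q \<gamma> = p \<beta>" by (simp add: q_def \<beta>_def wact_lskY)
      show "q \<gamma> = Pscale (p \<alpha>0) (mon (\<lambda>_. 0)) \<gamma>"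
      proof (cases "\<gamma> = (\<lambda>_. 0)")
        case True
        have "\<beta> = \<alpha>0" using Pn_vanish[OF pP] a0 unfolding \<beta>_def True Sp_def by (auto simp: fun_eq_iff)
        then show ?thesis using qg True by (simp add: Pscale_def mon_def)
      next
        case False
        have "p \<beta> = 0"
        proof (rule ccontr)
          assume bnz: "p \<beta> \<noteq> 0"
          obtain j where gj: "\<gamma> j \<noteq> 0" using False by (auto simp: fun_eq_iff)
          show False
          proof (cases "j < n")
            case False
            then have "\<beta> j = \<gamma> j" by (simp add: \<beta>_def)
            then show False using Pn_vanish[OF pP bnz, of j] False gj by simp
          next
            case True
            have "deg \<alpha>0 < deg \<beta>"
              unfolding deg_def \<beta>_def using True gj
              by (intro sum_strict_mono_ex1) auto
            moreover have "deg \<beta> \<le> deg \<alpha>0" using a0max[of \<beta>] bnz by (simp add: Sp_def)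
            ultimately show False by simp
          qed
        qed
        then show ?thesis using qg False by (simp add: Pscale_def mon_def)
      qed
    qed
    have pa0: "p \<alpha>0 \<noteq> 0" using a0 by (simp add: Sp_def)
    have "Pscale (inverse (p \<alpha>0)) q = mon (\<lambda>_. 0)"
      using pa0 by (simp add: qeq Pscale_def fun_eq_iff)
    then have m0U: "mon (\<lambda>_. 0) \<in> U" using P.subspace_scale[OF sU qU] by metis
    have monU: "mon \<gamma> \<in> U" if "\<forall>j\<ge>n. \<gamma> j = 0" for \<gamma>
      using wact_sub_closed[OF cU _ m0U, of "lsk Xg n \<gamma>"] mon_gen[OF that, where 'k='k]
        lsk_words[of Xg n n \<gamma>] by simp
    have "U = Pn n"
    proof (rule equalityI)
      show "U \<subseteq> Pn n" by (rule UP)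
      show "Pn n \<subseteq> U"
      proof
        fix r :: "(nat \<Rightarrow> nat) \<Rightarrow> 'k" assume rP: "r \<in> Pn n"
        have "(\<Sum>\<gamma>\<in>{\<alpha>. r \<alpha> \<noteq> 0}. Pscale (r \<gamma>) (mon \<gamma>)) \<in> U"
          using rP by (intro P.subspace_sum[OF sU] P.subspace_scale[OF sU] monU) (auto simp: Pn_iff)
        then show "r \<in> U" using Pn_expand[OF rP] by simp
      qed
    qed
    then show ?thesis by simp
  qed
qed

lemma Pn_cyclic:
  assumes qP: "q \<in> Pn n" and qnz: "q \<noteq> 0"
  shows "{actF Pscale xop yop r q | r. r \<in> Fn n} = (Pn n :: (_ \<Rightarrow> 'k::field) set)"
proof -
  interpret P: vector_space "Pscale :: 'k::field \<Rightarrow> _" by (rule Pscale_vs)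
  define U where "U = {actF Pscale xop yop r q | r. r \<in> Fn n}"
  have S: "smod n (Pscale :: 'k \<Rightarrow> _) (Pn n) xop yop" by (rule smod_Pn)
  have sU: "P.subspace U"
    unfolding P.subspace_def U_def
  proof (intro conjI ballI allI)
    show "0 \<in> {actF Pscale xop yop r q | r. r \<in> Fn n}"
      using smod.actF_zero_fun[OF S, of q] Fn_zero by (metis (mono_tags, lifting) mem_Collect_eq)
    fix x y assume "x \<in> {actF Pscale xop yop r q | r. r \<in> Fn n}" "y \<in> {actF Pscale xop yop r q | r. r \<in> Fn n}"
    then obtain f g where "f \<in> Fn n" "g \<in> Fn n" "x = actF Pscale xop yop f q" "y = actF Pscale xop yop g q" by auto
    then have "x + y = actF Pscale xop yop (\<lambda>w. f w + g w) q" "(\<lambda>w. f w + g w) \<in> Fn n"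
      using smod.actF_add[OF S, of f g q] Fn_add[of f n g] by auto
    then show "x + y \<in> {actF Pscale xop yop r q | r. r \<in> Fn n}" by blast
  next
    fix c x assume "x \<in> {actF Pscale xop yop r q | r. r \<in> Fn n}"
    then obtain f where "f \<in> Fn n" "x = actF Pscale xop yop f q" by auto
    then have "Pscale c x = actF Pscale xop yop (\<lambda>w. c * f w) q" "(\<lambda>w. c * f w) \<in> Fn n"
      using smod.actF_smul[OF S, of f c q] Fn_smul[of f n c] by auto
    then show "Pscale c x \<in> {actF Pscale xop yop r q | r. r \<in> Fn n}" by blast
  qed
  have UP: "U \<subseteq> Pn n" unfolding U_def using smod.actF_in[OF S _ qP] by auto
  have cU: "\<forall>i<n. \<forall>u\<in>U. xop i u \<in> U \<and> yop i u \<in> U"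
  proof (intro allI impI ballI)
    fix i u assume i: "i < n" and "u \<in> U"
    then obtain f where f: "f \<in> Fn n" "u = actF Pscale xop yop f q" unfolding U_def by auto
    have "xop i u = actF Pscale xop yop (fmul (delta [Xg i]) f) q"
      using smod.actF_lmul[OF S f(1) _ qP, of "[Xg i]"] i f by simp
    moreover have "yop i u = actF Pscale xop yop (fmul (delta [Yg i]) f) q"
      using smod.actF_lmul[OF S f(1) _ qP, of "[Yg i]"] i f by simp
    moreover have "fmul (delta [Xg i]) f \<in> Fn n" "fmul (delta [Yg i]) f \<in> Fn n"
      using f i by (auto intro!: Fn_fmul_delta_left)
    ultimately show "xop i u \<in> U \<and> yop i u \<in> U"
      unfolding U_def by blast
  qed
  have eq: "actF Pscale xop yop (delta []) q = q" using smod.actF_delta[OF S, of "[]" q] by simp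
  have d: "(delta [] :: gen list \<Rightarrow> 'k) \<in> Fn n" using Fn_delta[of "[]" n, where 'k='k] by simp
  have qU: "q \<in> U" unfolding U_def
    by (rule CollectI, rule exI[of _ "delta []"], rule conjI) (use eq d in simp_all)
  have H: "\<forall>U. P.subspace U \<and> U \<subseteq> Pn n \<and> (\<forall>i<n. \<forall>u\<in>U. xop i u \<in> U \<and> yop i u \<in> U) \<longrightarrow> U = {0} \<or> U = Pn n"
    using Pn_simple[where 'k='k, of n] unfolding Sn_simple_def by (rule conjunct2)
  have "U = {0} \<or> U = Pn n"
    using H[rule_format, OF conjI[OF sU conjI[OF UP cU]]] .
  then have "U = Pn n" using qU qnz by blast
  then show ?thesis using U_def by simp
qed


fun Eel :: "nat \<Rightarrow> gen list \<Rightarrow> 'k::field" where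
  "Eel 0 = delta []"
| "Eel (Suc k) = (\<lambda>w. Eel k w - fmul (delta [Xg k, Yg k]) (Eel k) w)"

lemma Eel_Fn: "k \<le> n \<Longrightarrow> Eel k \<in> Fn n"
  by (induction k) (auto intro!: Fn_diff Fn_fmul_delta_left Fn_delta)

context smod begin

lemma actF_Eel_Suc: "Suc k \<le> n \<Longrightarrow> m \<in> M \<Longrightarrow>
  actF sc X Y (Eel (Suc k)) m = actF sc X Y (Eel k) m - X k (Y k (actF sc X Y (Eel k) m))"
proof -
  assume kn: "Suc k \<le> n" and m: "m \<in> M"
  have e1: "Eel k \<in> Fn n" using kn by (intro Eel_Fn) simp
  have e2: "fmul (delta [Xg k, Yg k]) (Eel k) \<in> Fn n" by (rule Fn_fmul_delta_left[OF e1]) (use kn in simp)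
  have "actF sc X Y (Eel (Suc k)) m = actF sc X Y (Eel k) m - actF sc X Y (fmul (delta [Xg k, Yg k]) (Eel k)) m"
    using actF_diff[OF e1 e2, of m] by simp
  also have "\<dots> = actF sc X Y (Eel k) m - X k (Y k (actF sc X Y (Eel k) m))"
    using actF_lmul[OF e1 _ m, of "[Xg k, Yg k]"] kn by simp
  finally show ?thesis .
qed

lemma Y_Eel: "k \<le> n \<Longrightarrow> m \<in> M \<Longrightarrow> i < k \<Longrightarrow> Y i (actF sc X Y (Eel k) m) = 0"
proof (induction k arbitrary: i)
  case 0 then show ?case by simp
next
  case (Suc k)
  define q where "q = actF sc X Y (Eel k) m"
  have qM: "q \<in> M" unfolding q_def using Suc.prems by (intro actF_in Eel_Fn) auto
  have kn: "k < n" using Suc.prems by simp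
  have in1: "X k (Y k q) \<in> M" using qM kn by (intro Xc Yc)
  have "Y i (actF sc X Y (Eel (Suc k)) m) = Y i q - Y i (X k (Y k q))"
    using actF_Eel_Suc[OF Suc.prems(1,2)] Y_diff[of i q "X k (Y k q)"] qM in1 Suc.prems
    by (simp add: q_def)
  also have "\<dots> = 0"
  proof (cases "i = k")
    case True then show ?thesis using YX[OF kn Yc[OF kn qM]] by simp
  next
    case False
    then have ik: "i < k" using Suc.prems by simp
    have yi: "Y i q = 0" unfolding q_def using Suc.IH[of i] Suc.prems ik by simp
    have "Y i (X k (Y k q)) = X k (Y i (Y k q))"
      using comm[of k i "Y k q"] kn ik Yc[OF kn qM] by simp
    also have "\<dots> = X k (Y k (Y i q))"
      using comm[of i k q] kn ik qM by simp
    also have "\<dots> = 0" using yi kn by (simp add: Y_zero X_zero)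
    finally show ?thesis using yi by simp
  qed
  finally show ?case .
qed

end

lemma Eel_Pn: "k \<le> n \<Longrightarrow> actF Pscale xop yop (Eel k) (mon (\<lambda>_. 0) :: _ \<Rightarrow> 'k::field) = mon (\<lambda>_. 0)"
proof (induction k)
  case 0 then show ?case using smod.actF_delta[OF smod_Pn, of "[]"] by simp
next
  case (Suc k)
  have y0: "yop k (mon (\<lambda>_. 0) :: _ \<Rightarrow> 'k) = 0"
    by (auto simp: yop_def mon_def fun_eq_iff)
  have x0: "xop k (0 :: _ \<Rightarrow> 'k) = 0" by (auto simp: xop_def fun_eq_iff)
  have m0P: "(mon (\<lambda>_. 0) :: _ \<Rightarrow> 'k) \<in> Pn n" by (rule mon_Pn) simp
  have "actF Pscale xop yop (Eel (Suc k)) (mon (\<lambda>_. 0) :: _ \<Rightarrow> 'k) = actF Pscale xop yop (Eel k) (mon (\<lambda>_. 0)) - xop k (yop k (actF Pscale xop yop (Eel k) (mon (\<lambda>_. 0) :: _ \<Rightarrow> 'k)))"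
    by (rule smod.actF_Eel_Suc[OF smod_Pn Suc.prems m0P])
  also have "\<dots> = mon (\<lambda>_. 0)" using Suc.IH Suc.prems y0 x0 by simp
  finally show ?case .
qed


context smod begin

lemma iso_imp:
  assumes iso: "Sn_iso_Pn n sc M X Y"
  shows "Sn_faithful n sc M X Y \<and> Sn_simple n sc M X Y"
proof -
  obtain \<phi> :: "'m \<Rightarrow> (nat \<Rightarrow> nat) \<Rightarrow> 'k" where
    bij: "bij_betw \<phi> M (Pn n)" and
    padd: "\<And>m m'. m \<in> M \<Longrightarrow> m' \<in> M \<Longrightarrow> \<phi> (m + m') = (\<lambda>\<alpha>. \<phi> m \<alpha> + \<phi> m' \<alpha>)" and
    psc: "\<And>c m. m \<in> M \<Longrightarrow> \<phi> (sc c m) = Pscale c (\<phi> m)" and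
    pX: "\<And>i m. i < n \<Longrightarrow> m \<in> M \<Longrightarrow> \<phi> (X i m) = xop i (\<phi> m)" and
    pY: "\<And>i m. i < n \<Longrightarrow> m \<in> M \<Longrightarrow> \<phi> (Y i m) = yop i (\<phi> m)"
    using iso unfolding Sn_iso_Pn_def by blast
  interpret P: vector_space "Pscale :: 'k \<Rightarrow> _" by (rule Pscale_vs)
  have S: "smod n (Pscale :: 'k \<Rightarrow> _) (Pn n) xop yop" by (rule smod_Pn)
  have padd': "\<phi> (m + m') = \<phi> m + \<phi> m'" if "m \<in> M" "m' \<in> M" for m m'
    using padd[OF that] by (simp add: plus_fun_def)
  have p0: "\<phi> 0 = 0"
  proof -
    have "\<phi> (0 + 0) = \<phi> 0 + \<phi> 0" using padd'[OF M0 M0] .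
    then show ?thesis by simp
  qed
  have pW: "\<phi> (wact X Y w m) = wact xop yop w (\<phi> m)" if "w \<in> words n" "m \<in> M" for w m
    using that
  proof (induction w)
    case Nil then show ?case by simp
  next
    case (Cons a w) then show ?case by (cases a) (auto simp: pX pY W_closed)
  qed
  have psum: "\<phi> (sum g A) = (\<Sum>a\<in>A. \<phi> (g a))" if "finite A" "\<And>a. a \<in> A \<Longrightarrow> g a \<in> M" for g and A :: "'b set"
    using that
  proof (induction A rule: finite_induct)
    case empty then show ?case by (simp add: p0)
  next
    case (insert x F) then show ?case by (simp add: padd' Msum)
  qed
  have pact: "\<phi> (actF sc X Y f m) = actF Pscale xop yop f (\<phi> m)" if f: "f \<in> Fn n" and m: "m \<in> M" for f m
  proof -
    have fin: "finite {w. f w \<noteq> 0}" and sw: "{w. f w \<noteq> 0} \<subseteq> words n" using f by (auto simp: Fn_iff supp_def)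
    have "\<phi> (actF sc X Y f m) = (\<Sum>w\<in>{w. f w \<noteq> 0}. \<phi> (sc (f w) (wact X Y w m)))"
      unfolding actF_def using fin sw m by (intro psum) (auto intro!: Msc W_closed)
    also have "\<dots> = (\<Sum>w\<in>{w. f w \<noteq> 0}. Pscale (f w) (wact xop yop w (\<phi> m)))"
      using sw m by (intro sum.cong refl) (auto simp: psc pW W_closed)
    finally show ?thesis by (simp add: actF_def)
  qed
  have surj: "\<phi> ` M = Pn n" and inj: "inj_on \<phi> M" using bij by (auto simp: bij_betw_def)
  have faith: "Sn_faithful n sc M X Y"
    unfolding Sn_faithful_def
  proof (intro ballI impI)
    fix f :: "gen list \<Rightarrow> 'k" assume f: "f \<in> Fn n" and ann: "\<forall>m\<in>M. actF sc X Y f m = 0"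
    have "\<forall>p\<in>Pn n. actF Pscale xop yop f p = 0"
    proof
      fix p :: "(nat \<Rightarrow> nat) \<Rightarrow> 'k" assume "p \<in> Pn n"
      then obtain m where m: "m \<in> M" "p = \<phi> m" using surj by auto
      show "actF Pscale xop yop f p = 0" using pact[OF f m(1)] ann m p0 by simp
    qed
    then show "f \<in> Sn_ideal n" using Pn_faithful[where 'k='k, of n] f unfolding Sn_faithful_def by blast
  qed
  have simple: "Sn_simple n sc M X Y"
    unfolding Sn_simple_def
  proof (intro conjI allI impI)
    show "M \<noteq> {0}"
    proof
      assume "M = {0}"
      then have "Pn n = {0 :: _ \<Rightarrow> 'k}" using surj p0 by auto
      then show False using Pn_simple[where 'k='k, of n] unfolding Sn_simple_def by blast
    qed
    fix U assume "vs.subspace U \<and> U \<subseteq> M \<and> (\<forall>i<n. \<forall>u\<in>U. X i u \<in> U \<and> Y i u \<in> U)"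
    then have sU: "vs.subspace U" and UM: "U \<subseteq> M" and cU: "\<forall>i<n. \<forall>u\<in>U. X i u \<in> U \<and> Y i u \<in> U" by auto
    define V where "V = \<phi> ` U"
    have sV: "P.subspace V" unfolding P.subspace_def V_def
    proof (intro conjI ballI allI)
      show "0 \<in> \<phi> ` U" using vs.subspace_0[OF sU] p0 by force
      fix x y assume "x \<in> \<phi> ` U" "y \<in> \<phi> ` U"
      then obtain u u' where "u \<in> U" "u' \<in> U" "x = \<phi> u" "y = \<phi> u'" by auto
      then show "x + y \<in> \<phi> ` U" using padd'[of u u'] UM vs.subspace_add[OF sU] by (metis image_eqI subsetD)
    next
      fix c x assume "x \<in> \<phi> ` U"
      then obtain u where "u \<in> U" "x = \<phi> u" by auto
      then show "Pscale c x \<in> \<phi> ` U" using psc[of u c] UM vs.subspace_scale[OF sU] by (metis image_eqI subsetD)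
    qed
    have VP: "V \<subseteq> Pn n" unfolding V_def using surj UM by auto
    have cV: "\<forall>i<n. \<forall>u\<in>V. xop i u \<in> V \<and> yop i u \<in> V"
    proof (intro allI impI ballI)
      fix i x assume i: "i < n" and "x \<in> V"
      then obtain u where u: "u \<in> U" "x = \<phi> u" unfolding V_def by auto
      then have "xop i x = \<phi> (X i u)" "yop i x = \<phi> (Y i u)" using pX pY i UM by auto
      then show "xop i x \<in> V \<and> yop i x \<in> V" unfolding V_def using cU i u by auto
    qed
    have "V = {0} \<or> V = Pn n"
      using Pn_simple[where 'k='k, of n] sV VP cV unfolding Sn_simple_def by blast
    then show "U = {0} \<or> U = M"
    proof
      assume "V = {0}"
      have "U \<subseteq> {0}"
      proof
        fix u assume "u \<in> U"
        then have "\<phi> u = \<phi> 0" using \<open>V = {0}\<close> p0 unfolding V_def by auto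
        then show "u \<in> {0}" using inj UM \<open>u \<in> U\<close> M0 by (auto dest: inj_onD)
      qed
      then show ?thesis using vs.subspace_0[OF sU] by auto
    next
      assume "V = Pn n"
      then have "\<phi> ` U = \<phi> ` M" unfolding V_def using surj by simp
      then show ?thesis using inj UM by (simp add: inj_on_image_eq_iff)
    qed
  qed
  show ?thesis using faith simple by simp
qed

end


context smod begin

lemma fs_imp_iso:
  assumes F: "Sn_faithful n sc M X Y" and Sm: "Sn_simple n sc M X Y"
  shows "Sn_iso_Pn n sc M X Y"
proof -
  interpret P: vector_space "Pscale :: 'k \<Rightarrow> _" by (rule Pscale_vs)
  have SP: "smod n (Pscale :: 'k \<Rightarrow> _) (Pn n) xop yop" by (rule smod_Pn)
  have m0P: "(mon (\<lambda>_. 0) :: _ \<Rightarrow> 'k) \<in> Pn n" by (rule mon_Pn) simp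
  have EF: "(Eel n :: gen list \<Rightarrow> 'k) \<in> Fn n" by (rule Eel_Fn) simp
  have Enot: "(Eel n :: gen list \<Rightarrow> 'k) \<notin> Sn_ideal n"
  proof
    assume "(Eel n :: gen list \<Rightarrow> 'k) \<in> Sn_ideal n"
    then have "actF Pscale xop yop (Eel n) (mon (\<lambda>_. 0) :: _ \<Rightarrow> 'k) = 0"
      using smod.ideal_sound[OF SP] m0P by blast
    then have "(mon (\<lambda>_. 0) :: _ \<Rightarrow> 'k) = 0" using Eel_Pn[of n n, where 'k='k] by simp
    then show False using mon_nz by blast
  qed
  obtain m where mM: "m \<in> M" and mnz: "actF sc X Y (Eel n) m \<noteq> 0"
    using F EF Enot unfolding Sn_faithful_def by blast
  define m0 where "m0 = actF sc X Y (Eel n) m"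
  have m0M: "m0 \<in> M" unfolding m0_def using EF mM by (rule actF_in)
  have m0nz: "m0 \<noteq> 0" using mnz by (simp add: m0_def)
  have Ym0: "Y i m0 = 0" if "i < n" for i
    unfolding m0_def using Y_Eel[of n m i] mM that by simp
  define v where "v \<gamma> = wact X Y (lsk Xg n \<gamma>) m0" for \<gamma>
  have lw: "lsk Xg n \<gamma> \<in> words n" for \<gamma> by (rule lsk_words) auto
  have vM: "v \<gamma> \<in> M" for \<gamma> unfolding v_def using lw m0M by (rule W_closed)
  have Xv: "X i (v \<gamma>) = v (\<gamma>(i := \<gamma> i + 1))" if i: "i < n" for i \<gamma>
  proof -
    have "X i (v \<gamma>) = wact X Y (Xg i # lsk Xg n \<gamma>) m0" by (simp add: v_def)
    also have "\<dots> = wact X Y (lsk Xg n (\<gamma>(i := \<gamma> i + 1))) m0"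
      by (rule wcong_act[OF push_X[OF i order.refl]]) (use i lw m0M in auto)
    finally show ?thesis by (simp add: v_def)
  qed
  have Yv: "Y i (v \<gamma>) = (if 1 \<le> \<gamma> i then v (\<gamma>(i := \<gamma> i - 1)) else 0)" if i: "i < n" for i \<gamma>
  proof -
    have "Y i (v \<gamma>) = wact X Y (Yg i # lsk Xg n \<gamma>) m0" by (simp add: v_def)
    also have "\<dots> = wact X Y (if i < n \<and> 1 \<le> \<gamma> i then lsk Xg n (\<gamma>(i := \<gamma> i - 1)) else lsk Xg n \<gamma> @ [Yg i]) m0"
      by (rule wcong_act[OF Y_past_X[OF i order.refl]]) (use i lw m0M in auto)
    also have "\<dots> = (if 1 \<le> \<gamma> i then v (\<gamma>(i := \<gamma> i - 1)) else 0)"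
      using i Ym0[OF i] by (auto simp: v_def wact_append W_zero lw)
    finally show ?thesis .
  qed
  define \<psi> where "\<psi> p = (\<Sum>\<gamma>\<in>{\<alpha>. p \<alpha> \<noteq> 0}. sc (p \<gamma>) (v \<gamma>))" for p :: "(nat \<Rightarrow> nat) \<Rightarrow> 'k"
  have \<psi>sup: "\<psi> p = (\<Sum>\<gamma>\<in>A. sc (p \<gamma>) (v \<gamma>))" if "finite A" "{\<alpha>. p \<alpha> \<noteq> 0} \<subseteq> A" for p A
    unfolding \<psi>_def by (rule sum.mono_neutral_left) (use that in auto)
  have finP: "finite {\<alpha>. p \<alpha> \<noteq> 0}" if "p \<in> Pn n" for p :: "(nat \<Rightarrow> nat) \<Rightarrow> 'k"
    using that by (simp add: Pn_iff)
  have \<psi>M: "\<psi> p \<in> M" for p unfolding \<psi>_def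
    by (cases "finite {\<alpha>. p \<alpha> \<noteq> 0}") (auto intro!: Msum Msc vM M0)
  have \<psi>add: "\<psi> (p + q) = \<psi> p + \<psi> q" if "p \<in> Pn n" "q \<in> Pn n" for p q
  proof -
    let ?A = "{\<alpha>. p \<alpha> \<noteq> 0} \<union> {\<alpha>. q \<alpha> \<noteq> 0}"
    have fin: "finite ?A" using finP that by simp
    have "\<psi> (p + q) = (\<Sum>\<gamma>\<in>?A. sc (p \<gamma> + q \<gamma>) (v \<gamma>))"
    proof (rule \<psi>sup[OF fin, of "p + q", simplified])
      show "{\<alpha>. p \<alpha> + q \<alpha> \<noteq> 0} \<subseteq> {\<alpha>. p \<alpha> \<noteq> 0} \<union> {\<alpha>. q \<alpha> \<noteq> 0}" by auto
    qed
    also have "\<dots> = (\<Sum>\<gamma>\<in>?A. sc (p \<gamma>) (v \<gamma>)) + (\<Sum>\<gamma>\<in>?A. sc (q \<gamma>) (v \<gamma>))"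
      by (simp add: vs.scale_left_distrib sum.distrib)
    also have "\<dots> = \<psi> p + \<psi> q" using \<psi>sup[OF fin, of p] \<psi>sup[OF fin, of q] by auto
    finally show ?thesis .
  qed
  have \<psi>sc: "\<psi> (Pscale c p) = sc c (\<psi> p)" if "p \<in> Pn n" for p c
  proof -
    have fin: "finite {\<alpha>. p \<alpha> \<noteq> 0}" using finP that by simp
    have "\<psi> (Pscale c p) = (\<Sum>\<gamma>\<in>{\<alpha>. p \<alpha> \<noteq> 0}. sc (c * p \<gamma>) (v \<gamma>))"
      using \<psi>sup[OF fin, of "Pscale c p"] by (auto simp: Pscale_def)
    also have "\<dots> = sc c (\<psi> p)" by (simp add: \<psi>_def vs.scale_sum_right)
    finally show ?thesis .
  qed
  have \<psi>0: "\<psi> 0 = 0" by (simp add: \<psi>_def)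
  have \<psi>x: "\<psi> (xop i p) = X i (\<psi> p)" if p: "p \<in> Pn n" and i: "i < n" for p i
  proof -
    let ?A = "{\<alpha>. p \<alpha> \<noteq> 0}"
    define sh where "sh \<beta> = \<beta>(i := \<beta> i + 1)" for \<beta> :: "nat \<Rightarrow> nat"
    have fin: "finite ?A" using finP p by simp
    have inj: "inj_on sh ?A"
      unfolding inj_on_def sh_def
    proof (intro ballI impI)
      fix x y :: "nat \<Rightarrow> nat" assume "x(i := x i + 1) = y(i := y i + 1)"
      then show "x = y" by (metis add_right_cancel fun_upd_eqD fun_upd_idem_iff fun_upd_upd)
    qed
    have sub: "{\<alpha>. xop i p \<alpha> \<noteq> 0} \<subseteq> sh ` ?A"
    proof
      fix \<alpha> assume "\<alpha> \<in> {\<alpha>. xop i p \<alpha> \<noteq> 0}"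
      then have h: "1 \<le> \<alpha> i" "p (\<alpha>(i := \<alpha> i - 1)) \<noteq> 0" by (auto simp: xop_def split: if_splits)
      have "\<alpha> = sh (\<alpha>(i := \<alpha> i - 1))" using h by (auto simp: fun_eq_iff sh_def)
      then show "\<alpha> \<in> sh ` ?A" using h by blast
    qed
    have "\<psi> (xop i p) = (\<Sum>\<gamma>\<in>sh ` ?A. sc (xop i p \<gamma>) (v \<gamma>))"
      by (rule \<psi>sup[OF finite_imageI[OF fin] sub])
    also have "\<dots> = (\<Sum>\<beta>\<in>?A. sc (xop i p (sh \<beta>)) (v (sh \<beta>)))"
      by (rule sum.reindex[OF inj, unfolded comp_def])
    also have "\<dots> = (\<Sum>\<beta>\<in>?A. sc (p \<beta>) (X i (v \<beta>)))"
      by (intro sum.cong refl) (simp add: xop_def sh_def Xv[OF i])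
    also have "\<dots> = (\<Sum>\<beta>\<in>?A. wact X Y [Xg i] (sc (p \<beta>) (v \<beta>)))"
      by (intro sum.cong refl) (simp add: Xsc[OF i vM])
    also have "\<dots> = wact X Y [Xg i] (\<psi> p)"
      unfolding \<psi>_def by (rule W_sum[symmetric]) (use i fin in \<open>auto intro: Msc vM\<close>)
    finally show ?thesis by simp
  qed
  have \<psi>y: "\<psi> (yop i p) = Y i (\<psi> p)" if p: "p \<in> Pn n" and i: "i < n" for p i
  proof -
    let ?A = "{\<alpha>. p \<alpha> \<noteq> 0}"
    let ?B = "{\<beta> \<in> ?A. 1 \<le> \<beta> i}"
    define sd where "sd \<beta> = \<beta>(i := \<beta> i - 1)" for \<beta> :: "nat \<Rightarrow> nat"
    have fin: "finite ?A" using finP p by simp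
    have inj: "inj_on sd ?B"
      unfolding inj_on_def sd_def
    proof (intro ballI impI)
      fix x y :: "nat \<Rightarrow> nat" assume xy: "x \<in> ?B" "y \<in> ?B" and e: "x(i := x i - 1) = y(i := y i - 1)"
      show "x = y"
      proof
        fix j show "x j = y j"
        proof (cases "j = i")
          case True
          have "x i - 1 = y i - 1" using e by (metis fun_upd_same)
          then show ?thesis using xy True by auto
        next
          case False then show ?thesis using e by (metis fun_upd_other)
        qed
      qed
    qed
    have sub: "{\<alpha>. yop i p \<alpha> \<noteq> 0} \<subseteq> sd ` ?B"
    proof
      fix \<alpha> assume "\<alpha> \<in> {\<alpha>. yop i p \<alpha> \<noteq> 0}"
      then have h: "p (\<alpha>(i := \<alpha> i + 1)) \<noteq> 0" by (auto simp: yop_def)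
      have "\<alpha> = sd (\<alpha>(i := \<alpha> i + 1))" by (auto simp: fun_eq_iff sd_def)
      moreover have "\<alpha>(i := \<alpha> i + 1) \<in> ?B" using h by simp
      ultimately show "\<alpha> \<in> sd ` ?B" by blast
    qed
    have finB: "finite ?B" using fin by simp
    have "\<psi> (yop i p) = (\<Sum>\<gamma>\<in>sd ` ?B. sc (yop i p \<gamma>) (v \<gamma>))"
      by (rule \<psi>sup[OF finite_imageI[OF finB] sub])
    also have "\<dots> = (\<Sum>\<beta>\<in>?B. sc (yop i p (sd \<beta>)) (v (sd \<beta>)))"
      by (rule sum.reindex[OF inj, unfolded comp_def])
    also have "\<dots> = (\<Sum>\<beta>\<in>?B. sc (p \<beta>) (v (sd \<beta>)))"
    proof (intro sum.cong refl)
      fix \<beta> assume "\<beta> \<in> ?B"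
      then have "(\<beta>(i := \<beta> i - 1))(i := \<beta> i - 1 + 1) = \<beta>" by (auto simp: fun_eq_iff)
      then show "sc (yop i p (sd \<beta>)) (v (sd \<beta>)) = sc (p \<beta>) (v (sd \<beta>))"
        by (simp add: yop_def sd_def)
    qed
    also have "\<dots> = (\<Sum>\<beta>\<in>?A. if 1 \<le> \<beta> i then sc (p \<beta>) (v (sd \<beta>)) else 0)"
      by (rule sum.inter_filter[OF fin])
    also have "\<dots> = (\<Sum>\<beta>\<in>?A. wact X Y [Yg i] (sc (p \<beta>) (v \<beta>)))"
      by (intro sum.cong refl) (simp add: Ysc[OF i vM] Yv[OF i] sd_def)
    also have "\<dots> = wact X Y [Yg i] (\<psi> p)"
      unfolding \<psi>_def by (rule W_sum[symmetric]) (use i fin in \<open>auto intro: Msc vM\<close>)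
    finally show ?thesis by simp
  qed
  have \<psi>m0: "\<psi> (mon (\<lambda>_. 0)) = m0"
  proof -
    have "{\<alpha>. (mon (\<lambda>_. 0) :: _ \<Rightarrow> 'k) \<alpha> \<noteq> 0} = {\<lambda>_. 0}" by (auto simp: mon_def)
    then show ?thesis by (simp add: \<psi>_def mon_def v_def lsk_zero)
  qed
  have Pdiff: "p + Pscale (-1) q \<in> Pn n" if "p \<in> Pn n" "q \<in> Pn n" for p q :: "(nat \<Rightarrow> nat) \<Rightarrow> 'k"
    using that by (intro Pn_add Pn_scale)
  have \<psi>diff: "\<psi> (p + Pscale (-1) q) = \<psi> p - \<psi> q" if pq: "p \<in> Pn n" "q \<in> Pn n" for p q
  proof -
    have "\<psi> (p + Pscale (-1) q) = \<psi> p + \<psi> (Pscale (-1) q)" by (rule \<psi>add[OF pq(1) Pn_scale[OF pq(2)]])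
    also have "\<dots> = \<psi> p + sc (-1) (\<psi> q)" by (simp only: \<psi>sc[OF pq(2)])
    also have "\<dots> = \<psi> p - \<psi> q" by simp
    finally show ?thesis .
  qed
  define K where "K = {p \<in> Pn n. \<psi> p = 0}"
  have sK: "P.subspace K" unfolding P.subspace_def K_def
    using \<psi>0 Pn_zero by (auto simp: \<psi>add \<psi>sc Pn_add Pn_scale)
  have cK: "\<forall>i<n. \<forall>u\<in>K. xop i u \<in> K \<and> yop i u \<in> K"
    unfolding K_def by (auto simp: \<psi>x \<psi>y Pn_xop Pn_yop X_zero Y_zero)
  have "K = {0} \<or> K = Pn n"
    using Pn_simple[where 'k='k, of n] sK cK unfolding Sn_simple_def K_def by blast
  moreover have "K \<noteq> Pn n" using m0P \<psi>m0 m0nz unfolding K_def by blast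
  ultimately have K0: "K = {0}" by simp
  have inj\<psi>: "inj_on \<psi> (Pn n)"
  proof (rule inj_onI)
    fix p q assume pq: "p \<in> Pn n" "q \<in> Pn n" "\<psi> p = \<psi> q"
    then have "p + Pscale (-1) q \<in> K" unfolding K_def using Pdiff \<psi>diff by auto
    then have "p + Pscale (-1) q = 0" using K0 by simp
    then show "p = q" by (auto simp: fun_eq_iff Pscale_def)
  qed
  define I where "I = \<psi> ` Pn n"
  have sI: "vs.subspace I" unfolding vs.subspace_def I_def
  proof (intro conjI ballI allI)
    show "0 \<in> \<psi> ` Pn n" using \<psi>0 Pn_zero by force
    fix x y assume "x \<in> \<psi> ` Pn n" "y \<in> \<psi> ` Pn n"
    then obtain p q where "p \<in> Pn n" "q \<in> Pn n" "x = \<psi> p" "y = \<psi> q" by auto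
    then show "x + y \<in> \<psi> ` Pn n" using \<psi>add Pn_add by (metis image_eqI)
  next
    fix c x assume "x \<in> \<psi> ` Pn n"
    then obtain p where "p \<in> Pn n" "x = \<psi> p" by auto
    then show "sc c x \<in> \<psi> ` Pn n" using \<psi>sc Pn_scale by (metis image_eqI)
  qed
  have IM: "I \<subseteq> M" unfolding I_def using \<psi>M by auto
  have cI: "\<forall>i<n. \<forall>u\<in>I. X i u \<in> I \<and> Y i u \<in> I"
  proof (intro allI impI ballI)
    fix i u assume i: "i < n" and "u \<in> I"
    then obtain p where p: "p \<in> Pn n" "u = \<psi> p" unfolding I_def by auto
    then show "X i u \<in> I \<and> Y i u \<in> I" unfolding I_def
      using \<psi>x[OF p(1) i] \<psi>y[OF p(1) i] Pn_xop[OF i p(1)] Pn_yop[OF i p(1)] by (metis image_eqI)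
  qed
  have "I = {0} \<or> I = M" using Sm sI IM cI unfolding Sn_simple_def by blast
  moreover have "m0 \<in> I" unfolding I_def using \<psi>m0 m0P by (metis image_eqI)
  ultimately have IeM: "\<psi> ` Pn n = M" using m0nz unfolding I_def by auto
  have bij\<psi>: "bij_betw \<psi> (Pn n) M" using inj\<psi> IeM by (simp add: bij_betw_def)
  define \<phi> where "\<phi> = inv_into (Pn n) \<psi>"
  have bij\<phi>: "bij_betw \<phi> M (Pn n)" unfolding \<phi>_def by (rule bij_betw_inv_into[OF bij\<psi>])
  have \<phi>\<psi>: "\<phi> (\<psi> p) = p" if "p \<in> Pn n" for p
    unfolding \<phi>_def using inv_into_f_f[OF inj\<psi> that] .
  have gen: "\<exists>p\<in>Pn n. m = \<psi> p" if "m \<in> M" for m using IeM that by auto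
  show ?thesis
    unfolding Sn_iso_Pn_def
  proof (intro exI[of _ \<phi>] conjI ballI allI impI)
    show "bij_betw \<phi> M (Pn n)" by (rule bij\<phi>)
  next
    fix m m' assume "m \<in> M" "m' \<in> M"
    then obtain p p' where p: "p \<in> Pn n" "m = \<psi> p" and p': "p' \<in> Pn n" "m' = \<psi> p'" using gen by blast
    have e: "m + m' = \<psi> (p + p')" using \<psi>add[OF p(1) p'(1)] p(2) p'(2) by simp
    have "\<phi> (m + m') = p + p'" unfolding e by (rule \<phi>\<psi>[OF Pn_add[OF p(1) p'(1)]])
    moreover have "\<phi> m = p" "\<phi> m' = p'" using \<phi>\<psi> p p' by auto
    ultimately show "\<phi> (m + m') = (\<lambda>\<alpha>. \<phi> m \<alpha> + \<phi> m' \<alpha>)" by (simp add: plus_fun_def)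
  next
    fix c m assume "m \<in> M"
    then obtain p where p: "p \<in> Pn n" "m = \<psi> p" using gen by blast
    have e: "sc c m = \<psi> (Pscale c p)" using \<psi>sc[OF p(1)] p(2) by simp
    have "\<phi> m = p" using \<phi>\<psi> p by auto
    then show "\<phi> (sc c m) = Pscale c (\<phi> m)" unfolding e using \<phi>\<psi>[OF Pn_scale[OF p(1)]] by simp
  next
    fix i m assume i: "i < n" and "m \<in> M"
    then obtain p where p: "p \<in> Pn n" "m = \<psi> p" using gen by blast
    have e: "X i m = \<psi> (xop i p)" using \<psi>x[OF p(1) i] p(2) by simp
    have "\<phi> m = p" using \<phi>\<psi> p by auto
    then show "\<phi> (X i m) = xop i (\<phi> m)" unfolding e using \<phi>\<psi>[OF Pn_xop[OF i p(1)]] by simp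
  next
    fix i m assume i: "i < n" and "m \<in> M"
    then obtain p where p: "p \<in> Pn n" "m = \<psi> p" using gen by blast
    have e: "Y i m = \<psi> (yop i p)" using \<psi>y[OF p(1) i] p(2) by simp
    have "\<phi> m = p" using \<phi>\<psi> p by auto
    then show "\<phi> (Y i m) = yop i (\<phi> m)" unfolding e using \<phi>\<psi>[OF Pn_yop[OF i p(1)]] by simp
  qed
qed

end


context smod begin
lemma actF_zero_vec: "f \<in> Fn n \<Longrightarrow> actF sc X Y f 0 = 0"
  unfolding actF_def
  by (rule sum.neutral) (auto simp: Fn_iff supp_def W_zero)
end

lemma fmul_delta_Nil_right: "fmul f (delta []) = f"
  by (auto simp: fun_eq_iff fmul_delta_right)

definition Lp :: "nat \<Rightarrow> ((nat \<Rightarrow> nat) \<Rightarrow> 'k::field) \<Rightarrow> (gen list \<Rightarrow> 'k) set" where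
  "Lp n p = {f \<in> Fn n. actF Pscale xop yop f p = 0}"

lemma Lp_max:
  assumes pP: "p \<in> Pn n" and pnz: "p \<noteq> 0"
  shows "Sn_max_left_ideal n (Lp n p :: (gen list \<Rightarrow> 'k::field) set)"
proof -
  have S: "smod n (Pscale :: 'k \<Rightarrow> _) (Pn n) xop yop" by (rule smod_Pn)
  have LI: "Sn_left_ideal n (Lp n p)"
    unfolding Sn_left_ideal_def
  proof (intro conjI ballI)
    show "Sn_ideal n \<subseteq> Lp n p"
      unfolding Lp_def using Sn_ideal_Fn smod.ideal_sound[OF S] pP by blast
    show "Lp n p \<subseteq> Fn n" unfolding Lp_def by auto
    fix f g :: "gen list \<Rightarrow> 'k" assume "f \<in> Lp n p" "g \<in> Lp n p"
    then show "(\<lambda>w. f w + g w) \<in> Lp n p" unfolding Lp_def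
      by (auto simp: smod.actF_add[OF S] Fn_add)
  next
    fix r f :: "gen list \<Rightarrow> 'k" assume r: "r \<in> Fn n" and "f \<in> Lp n p"
    then have f: "f \<in> Fn n" "actF Pscale xop yop f p = 0" unfolding Lp_def by auto
    have "actF Pscale xop yop (fmul r f) p = actF Pscale xop yop r (actF Pscale xop yop f p)"
      by (rule smod.actF_mult[OF S r f(1) pP])
    also have "\<dots> = 0" using f(2) smod.actF_zero_vec[OF S r] by simp
    finally show "fmul r f \<in> Lp n p" unfolding Lp_def using Fn_fmul[OF r f(1)] by simp
  qed
  have d: "(delta [] :: gen list \<Rightarrow> 'k) \<in> Fn n" by (rule Fn_delta) simp
  have dnot: "(delta [] :: gen list \<Rightarrow> 'k) \<notin> Lp n p"
    unfolding Lp_def using smod.actF_delta[OF S, of "[]" p] pnz by simp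
  show ?thesis
    unfolding Sn_max_left_ideal_def
  proof (intro conjI allI impI)
    show "Sn_left_ideal n (Lp n p)" by (rule LI)
    show "Lp n p \<noteq> Fn n" using d dnot by blast
    fix L' :: "(gen list \<Rightarrow> 'k) set"
    assume "Sn_left_ideal n L' \<and> Lp n p \<subseteq> L' \<and> L' \<noteq> Fn n"
    then have LI': "Sn_left_ideal n L'" and sub: "Lp n p \<subseteq> L'" and ne: "L' \<noteq> Fn n" by auto
    have L'F: "L' \<subseteq> Fn n" using LI' unfolding Sn_left_ideal_def by blast
    have L'add: "\<And>f g. f \<in> L' \<Longrightarrow> g \<in> L' \<Longrightarrow> (\<lambda>w. f w + g w) \<in> L'"
      using LI' unfolding Sn_left_ideal_def by blast
    have L'mul: "\<And>r f. r \<in> Fn n \<Longrightarrow> f \<in> L' \<Longrightarrow> fmul r f \<in> L'"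
      using LI' unfolding Sn_left_ideal_def by blast
    show "L' = Lp n p"
    proof (rule ccontr)
      assume "L' \<noteq> Lp n p"
      then obtain g where gL: "g \<in> L'" and gn: "g \<notin> Lp n p" using sub by blast
      have gF: "g \<in> Fn n" using gL L'F by auto
      define q where "q = actF Pscale xop yop g p"
      have qnz: "q \<noteq> 0" using gn gF unfolding Lp_def q_def by auto
      have qP: "q \<in> Pn n" unfolding q_def by (rule smod.actF_in[OF S gF pP])
      have "p \<in> {actF Pscale xop yop r q | r. r \<in> Fn n}" using Pn_cyclic[OF qP qnz] pP by simp
      then obtain r where r: "r \<in> Fn n" "actF Pscale xop yop r q = p" by auto
      define h where "h = fmul r g"
      have hL: "h \<in> L'" unfolding h_def by (rule L'mul[OF r(1) gL])
      have hF: "h \<in> Fn n" unfolding h_def by (rule Fn_fmul[OF r(1) gF])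
      have hp: "actF Pscale xop yop h p = p"
        unfolding h_def using smod.actF_mult[OF S r(1) gF pP] r(2) by (simp add: q_def)
      define dd where "dd = (\<lambda>w. (delta [] w :: 'k) - h w)"
      have ddF: "dd \<in> Fn n" unfolding dd_def by (rule Fn_diff[OF d hF])
      have "actF Pscale xop yop dd p = 0"
        unfolding dd_def using smod.actF_diff[OF S d hF, of p] smod.actF_delta[OF S, of "[]" p] hp by simp
      then have "dd \<in> Lp n p" using ddF unfolding Lp_def by simp
      then have "dd \<in> L'" using sub by auto
      from L'add[OF this hL] have dL: "(delta [] :: gen list \<Rightarrow> 'k) \<in> L'" by (simp add: dd_def)
      have "Fn n \<subseteq> L'"
      proof
        fix f :: "gen list \<Rightarrow> 'k" assume "f \<in> Fn n"
        from L'mul[OF this dL] show "f \<in> L'" by (simp add: fmul_delta_Nil_right)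
      qed
      then show False using ne L'F by auto
    qed
  qed
qed

lemma jacobson: "Sn_jacobson n = (Sn_ideal n :: (gen list \<Rightarrow> 'k::field) set)"
proof (rule equalityI)
  have S: "smod n (Pscale :: 'k \<Rightarrow> _) (Pn n) xop yop" by (rule smod_Pn)
  show "Sn_jacobson n \<subseteq> (Sn_ideal n :: (gen list \<Rightarrow> 'k) set)"
  proof
    fix a :: "gen list \<Rightarrow> 'k" assume "a \<in> Sn_jacobson n"
    then have aF: "a \<in> Fn n" and aL: "\<And>L. Sn_max_left_ideal n L \<Longrightarrow> a \<in> L"
      unfolding Sn_jacobson_def by auto
    have "\<forall>p\<in>Pn n. actF Pscale xop yop a p = 0"
    proof
      fix p :: "(nat \<Rightarrow> nat) \<Rightarrow> 'k" assume pP: "p \<in> Pn n"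
      show "actF Pscale xop yop a p = 0"
      proof (cases "p = 0")
        case True then show ?thesis using smod.actF_zero_vec[OF S aF] by simp
      next
        case False
        have "a \<in> Lp n p" by (rule aL[OF Lp_max[OF pP False]])
        then show ?thesis unfolding Lp_def by simp
      qed
    qed
    then show "a \<in> Sn_ideal n" using Pn_faithful[where 'k='k, of n] aF unfolding Sn_faithful_def by blast
  qed
  show "(Sn_ideal n :: (gen list \<Rightarrow> 'k) set) \<subseteq> Sn_jacobson n"
  proof
    fix a :: "gen list \<Rightarrow> 'k" assume aI: "a \<in> Sn_ideal n"
    have "a \<in> L" if L: "Sn_max_left_ideal n L" for L
    proof -
      have "Sn_ideal n \<subseteq> L" using L unfolding Sn_max_left_ideal_def Sn_left_ideal_def by simp
      then show ?thesis using aI by blast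
    qed
    then show "a \<in> Sn_jacobson n" unfolding Sn_jacobson_def using Sn_ideal_Fn[OF aI] by simp
  qed
qed

lemma primitive: "Sn_primitive n TYPE('k::field)"
  unfolding Sn_primitive_def
proof (intro exI conjI)
  have S: "smod n (Pscale :: 'k \<Rightarrow> _) (Pn n) xop yop" by (rule smod_Pn)
  have m0P: "(mon (\<lambda>_. 0) :: _ \<Rightarrow> 'k) \<in> Pn n" by (rule mon_Pn) simp
  have m0nz: "(mon (\<lambda>_. 0) :: _ \<Rightarrow> 'k) \<noteq> 0" by (rule mon_nz)
  show "Sn_max_left_ideal n (Lp n (mon (\<lambda>_. 0) :: _ \<Rightarrow> 'k))" by (rule Lp_max[OF m0P m0nz])
  show "{a \<in> Fn n. \<forall>r\<in>Fn n. fmul a r \<in> Lp n (mon (\<lambda>_. 0) :: _ \<Rightarrow> 'k)} = Sn_ideal n"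
  proof (rule equalityI)
    show "{a \<in> Fn n. \<forall>r\<in>Fn n. fmul a r \<in> Lp n (mon (\<lambda>_. 0) :: _ \<Rightarrow> 'k)} \<subseteq> Sn_ideal n"
    proof
      fix a assume "a \<in> {a \<in> Fn n. \<forall>r\<in>Fn n. fmul a r \<in> Lp n (mon (\<lambda>_. 0) :: _ \<Rightarrow> 'k)}"
      then have aF: "a \<in> Fn n" and ar: "\<And>r. r \<in> Fn n \<Longrightarrow> fmul a r \<in> Lp n (mon (\<lambda>_. 0) :: _ \<Rightarrow> 'k)" by auto
      have "\<forall>p\<in>Pn n. actF Pscale xop yop a p = 0"
      proof
        fix p :: "(nat \<Rightarrow> nat) \<Rightarrow> 'k" assume pP: "p \<in> Pn n"
        have "p \<in> {actF Pscale xop yop r (mon (\<lambda>_. 0)) | r. r \<in> Fn n}" using Pn_cyclic[OF m0P m0nz] pP by simp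
        then obtain r where r: "r \<in> Fn n" "actF Pscale xop yop r (mon (\<lambda>_. 0)) = p" by auto
        have "actF Pscale xop yop (fmul a r) (mon (\<lambda>_. 0)) = 0" using ar[OF r(1)] unfolding Lp_def by simp
        then show "actF Pscale xop yop a p = 0"
          using smod.actF_mult[OF S aF r(1) m0P] r(2) by simp
      qed
      then show "a \<in> Sn_ideal n" using Pn_faithful[where 'k='k, of n] aF unfolding Sn_faithful_def by blast
    qed
    show "Sn_ideal n \<subseteq> {a \<in> Fn n. \<forall>r\<in>Fn n. fmul a r \<in> Lp n (mon (\<lambda>_. 0) :: _ \<Rightarrow> 'k)}"
    proof
      fix a :: "gen list \<Rightarrow> 'k" assume aI: "a \<in> Sn_ideal n"
      have aF: "a \<in> Fn n" by (rule Sn_ideal_Fn[OF aI])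
      have "fmul a r \<in> Lp n (mon (\<lambda>_. 0) :: _ \<Rightarrow> 'k)" if r: "r \<in> Fn n" for r
      proof -
        have "actF Pscale xop yop (fmul a r) (mon (\<lambda>_. 0) :: _ \<Rightarrow> 'k) = actF Pscale xop yop a (actF Pscale xop yop r (mon (\<lambda>_. 0)))"
          by (rule smod.actF_mult[OF S aF r m0P])
        also have "\<dots> = 0" using smod.ideal_sound[OF S aI] smod.actF_in[OF S r m0P] by blast
        finally show ?thesis unfolding Lp_def using Fn_fmul[OF aF r] by simp
      qed
      then show "a \<in> {a \<in> Fn n. \<forall>r\<in>Fn n. fmul a r \<in> Lp n (mon (\<lambda>_. 0) :: _ \<Rightarrow> 'k)}" using aF by auto
    qed
  qed
qed

theorem corollary3p3:
  fixes n :: nat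
  shows "Sn_module n (Pscale :: 'k::field \<Rightarrow> _) (Pn n) xop yop
    \<and> Sn_faithful n (Pscale :: 'k \<Rightarrow> _) (Pn n) xop yop
    \<and> Sn_simple n (Pscale :: 'k \<Rightarrow> _) (Pn n) xop yop
    \<and> (\<forall>(sc :: 'k \<Rightarrow> 'm::ab_group_add \<Rightarrow> 'm) M X Y.
          Sn_module n sc M X Y \<longrightarrow>
          ((Sn_faithful n sc M X Y \<and> Sn_simple n sc M X Y) \<longleftrightarrow> Sn_iso_Pn n sc M X Y))
    \<and> Sn_jacobson n = (Sn_ideal n :: (gen list \<Rightarrow> 'k) set)
    \<and> Sn_primitive n TYPE('k)"
proof (intro conjI allI impI)
  show "Sn_module n (Pscale :: 'k::field \<Rightarrow> _) (Pn n) xop yop" by (rule Pn_module)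
  show "Sn_faithful n (Pscale :: 'k \<Rightarrow> _) (Pn n) xop yop" by (rule Pn_faithful)
  show "Sn_simple n (Pscale :: 'k \<Rightarrow> _) (Pn n) xop yop" by (rule Pn_simple)
  show "Sn_jacobson n = (Sn_ideal n :: (gen list \<Rightarrow> 'k) set)" by (rule jacobson)
  show "Sn_primitive n TYPE('k)" by (rule primitive)
  fix sc :: "'k \<Rightarrow> 'm::ab_group_add \<Rightarrow> 'm" and M X Y
  assume "Sn_module n sc M X Y"
  then interpret smod n sc M X Y by (rule smod.intro)
  show "(Sn_faithful n sc M X Y \<and> Sn_simple n sc M X Y) \<longleftrightarrow> Sn_iso_Pn n sc M X Y"
    using iso_imp fs_imp_iso by blast
qed


end
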